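(* Let $(X_t)_{t\in\mathbb{Z}}$ be a real stationary centered Gaussian sequence with covariance $r(t)=\mathbb{E}[X_iX_{i+t}]$, $r(0)=1$, and $r(t)\to0$ as $|t|\to\infty$. Let $H\in L^2(\mathbb{R},\gamma)$, where $\gamma$ is the standard Gaussian measure, have Hermite expansion $H=\sum_{k\ge1}c_kH_k$ (so $c_0=0$, $\sum_k c_k^2k!<\infty$), $H\neq0$, with Hermite rank $k_\ast$, and let $r_H(t)=\mathbb{E}[H(X_0)H(X_t)]$. Then $$\sum_{t\in\mathbb{Z}}|r_H(t)|<\infty\iff\sum_{t\in\mathbb{Z}}|r(t)|^{k_\ast}<\infty.$$ *)

theory Defs
  imports "HOL-Probability.Probability"
begin

definition gauss_measure :: "real measure" where
  "gauss_measure = density lborel std_normal_density"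

text \<open>Probabilists' Hermite polynomials He_k (leading coefficient 1),
  orthogonal w.r.t. gamma with E[He_k^2] = k!.\<close>
fun hermite :: "nat \<Rightarrow> real \<Rightarrow> real" where
  "hermite 0 x = 1"
| "hermite (Suc 0) x = x"
| "hermite (Suc (Suc k)) x = x * hermite (Suc k) x - real (Suc k) * hermite k x"

text \<open>Hermite coefficient c_k of H in L^2(gamma), so that H = sum_k c_k He_k.\<close>
definition hermite_coeff :: "(real \<Rightarrow> real) \<Rightarrow> nat \<Rightarrow> real" where
  "hermite_coeff H k = (\<integral>x. H x * hermite k x \<partial>gauss_measure) / fact k"

definition hermite_rank :: "(real \<Rightarrow> real) \<Rightarrow> nat" where
  "hermite_rank H = (LEAST k. hermite_coeff H k \<noteq> 0)"

definition centered_gaussian_rv :: "'a measure \<Rightarrow> ('a \<Rightarrow> real) \<Rightarrow> bool" where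
  "centered_gaussian_rv M Y \<longleftrightarrow> Y \<in> borel_measurable M \<and>
     ((AE \<omega> in M. Y \<omega> = 0) \<or> (\<exists>\<sigma>>0. distributed M lborel Y (normal_density 0 \<sigma>)))"

definition centered_gaussian_process :: "'a measure \<Rightarrow> ('i \<Rightarrow> 'a \<Rightarrow> real) \<Rightarrow> bool" where
  "centered_gaussian_process M X \<longleftrightarrow>
     (\<forall>S a. finite S \<longrightarrow> centered_gaussian_rv M (\<lambda>\<omega>. \<Sum>i\<in>S. a i * X i \<omega>))"

end

theory Submission
  imports Defs "HOL-Computational_Algebra.Polynomial"
begin

definition gm :: "nat \<Rightarrow> real" where
  "gm n = (if even n then fact n / (2 ^ (n div 2) * fact (n div 2)) else 0)"

lemma gm_0[simp]: "gm 0 = 1" by (simp add: gm_def)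
lemma gm_1[simp]: "gm (Suc 0) = 0" by (simp add: gm_def)
lemma gm_SS: "gm (Suc (Suc n)) = real (Suc n) * gm n"
proof (cases "even n")
  case True
  then obtain m where n: "n = 2*m" by blast
  have d: "Suc (Suc n) div 2 = Suc m" using n by simp
  have "gm (Suc (Suc n)) = fact (Suc (Suc n)) / (2 ^ Suc m * fact (Suc m))"
    using d n by (simp add: gm_def)
  also have "fact (Suc (Suc n)) = real (Suc (Suc n)) * real (Suc n) * fact n"
    by (simp add: fact_Suc)
  also have "(2::real) ^ Suc m * fact (Suc m) = real (Suc (Suc n)) * (2^m * fact m)"
    using n by (simp add: fact_Suc)
  finally have "gm (Suc (Suc n)) = real (Suc n) * (fact n / (2^m * fact m))" by simp
  then show ?thesis using n by (simp add: gm_def)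
next
  case False then show ?thesis by (simp add: gm_def)
qed

definition Eg :: "real poly \<Rightarrow> real" where
  "Eg p = (\<Sum>i\<le>degree p. coeff p i * gm i)"

lemma Eg_altdef: "degree p \<le> n \<Longrightarrow> Eg p = (\<Sum>i\<le>n. coeff p i * gm i)"
  unfolding Eg_def
  by (rule sum.mono_neutral_left) (auto simp: coeff_eq_0)

lemma Eg_add: "Eg (p + q) = Eg p + Eg q"
proof -
  let ?n = "max (degree p) (degree q)"
  have "degree (p+q) \<le> ?n" by (rule degree_add_le) auto
  then show ?thesis
    by (simp add: Eg_altdef[of _ ?n] Eg_altdef[of p ?n] Eg_altdef[of q ?n] sum.distrib algebra_simps)
qed

lemma Eg_smult: "Eg (smult c p) = c * Eg p"
  by (simp add: Eg_def sum_distrib_left mult.assoc)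

lemma Eg_diff: "Eg (p - q) = Eg p - Eg q"
  using Eg_add[of "p - q" q] by simp

lemma Eg_1[simp]: "Eg 1 = 1" by (simp add: Eg_def)
lemma Eg_0[simp]: "Eg 0 = 0" by (simp add: Eg_def)

lemma Eg_pCons0: "Eg (pCons 0 p) = Eg (pderiv p)"
proof -
  define n where "n = degree p"
  have "degree (pCons 0 p) \<le> Suc n" unfolding n_def by (simp add: degree_pCons_le)
  then have "Eg (pCons 0 p) = (\<Sum>i\<le>Suc n. coeff (pCons 0 p) i * gm i)" by (rule Eg_altdef)
  also have "\<dots> = (\<Sum>i\<le>n. coeff p i * gm (Suc i))"
    by (subst sum.atMost_Suc_shift) simp
  also have "\<dots> = (\<Sum>i\<le>Suc n. coeff p i * gm (Suc i))"
    by (simp add: n_def coeff_eq_0)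
  also have "\<dots> = (\<Sum>i\<le>n. coeff p (Suc i) * gm (Suc (Suc i)))"
    by (subst sum.atMost_Suc_shift) simp
  also have "\<dots> = (\<Sum>i\<le>n. coeff (pderiv p) i * gm i)"
    by (simp add: coeff_pderiv gm_SS mult_ac)
  also have "\<dots> = Eg (pderiv p)"
    by (rule Eg_altdef[symmetric]) (simp add: n_def degree_pderiv)
  finally show ?thesis .
qed

fun hp :: "nat \<Rightarrow> real poly" where
  "hp 0 = 1"
| "hp (Suc 0) = [:0, 1:]"
| "hp (Suc (Suc k)) = pCons 0 (hp (Suc k)) - smult (real (Suc k)) (hp k)"

lemma poly_hp: "poly (hp k) x = hermite k x"
  by (induction k rule: hp.induct) (auto simp: algebra_simps)

lemma hp_Suc: "hp (Suc k) = pCons 0 (hp k) - smult (real k) (hp (k - 1))"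
  by (cases k) auto

lemma pderiv_hp_aux: "pderiv (hp (Suc k)) = smult (real (Suc k)) (hp k) \<and>
   pderiv (hp (Suc (Suc k))) = smult (real (Suc (Suc k))) (hp (Suc k))"
proof (induction k)
  case 0
  then show ?case by (simp add: pderiv_pCons pderiv_diff)
next
  case (Suc k)
  have e: "hp (Suc (Suc (Suc k))) = pCons 0 (hp (Suc (Suc k))) - smult (real (Suc (Suc k))) (hp (Suc k))"
    by simp
  have "pderiv (hp (Suc (Suc (Suc k)))) = hp (Suc (Suc k)) + pCons 0 (pderiv (hp (Suc (Suc k))))
        - smult (real (Suc (Suc k))) (pderiv (hp (Suc k)))"
    by (subst e) (simp add: pderiv_pCons pderiv_diff pderiv_smult)
  also have "\<dots> = hp (Suc (Suc k)) + smult (real (Suc (Suc k))) (pCons 0 (hp (Suc k))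
        - smult (real (Suc k)) (hp k))"
    using Suc.IH by (simp add: smult_diff_right)
  also have "\<dots> = smult (real (Suc (Suc (Suc k)))) (hp (Suc (Suc k)))"
  proof -
    have g: "\<And>q::real poly. \<And>c. q + smult c q = smult (c + 1) q" by (simp add: smult_add_left)
    show ?thesis
    proof -
      have h3: "pCons 0 (hp (Suc k)) - smult (1 + real k) (hp k) = hp (Suc (Suc k))" by simp
      show ?thesis using g[of "hp (Suc (Suc k))" "real (Suc (Suc k))"]
        by (simp del: hp.simps add: add.commute h3)
    qed
  qed
  finally show ?case using Suc.IH by simp
qed

lemma pderiv_hp: "pderiv (hp k) = smult (real k) (hp (k - 1))"
  using pderiv_hp_aux[of "k - 1"] by (cases k) auto

lemma Eg_hp_rec: "Eg (hp j * hp (Suc k)) = real j * Eg (hp (j - 1) * hp k)"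
proof -
  have "hp j * hp (Suc k) = pCons 0 (hp j * hp k) - smult (real k) (hp j * hp (k - 1))"
    by (simp add: hp_Suc algebra_simps)
  then have "Eg (hp j * hp (Suc k)) = Eg (pderiv (hp j * hp k)) - real k * Eg (hp j * hp (k - 1))"
    by (simp add: Eg_diff Eg_smult Eg_pCons0)
  also have "pderiv (hp j * hp k) = smult (real j) (hp (j - 1) * hp k) + smult (real k) (hp j * hp (k - 1))"
    by (simp add: pderiv_mult pderiv_hp ac_simps)
  finally show ?thesis by (simp add: Eg_add Eg_smult)
qed

lemma Eg_hp_orth: "Eg (hp j * hp k) = (if j = k then fact k else 0)"
proof (induction k arbitrary: j)
  case 0
  show ?case
  proof (cases j)
    case 0 then show ?thesis by simp
  next
    case (Suc j')
    have "Eg (hp j * hp 0) = Eg (hp 0 * hp (Suc j'))" using Suc by (simp add: mult.commute)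
    also have "\<dots> = 0" using Eg_hp_rec[of 0 j'] by simp
    finally show ?thesis using Suc by simp
  qed
next
  case (Suc k)
  show ?case
  proof (cases j)
    case 0 then show ?thesis using Eg_hp_rec[of 0 k] by simp
  next
    case (Suc j')
    then show ?thesis using Suc.IH[of j'] by (simp add: Eg_hp_rec)
  qed
qed

lemma Eg_hp: "Eg (hp k) = (if k = 0 then 1 else 0)"
  using Eg_hp_orth[of 0 k] by simp


lemma pascal_conv:
  fixes w z :: "nat \<Rightarrow> real"
  shows "(\<Sum>i\<le>Suc k. real (Suc k choose i) * w i * z (Suc k - i)) =
    (\<Sum>i\<le>k. real (k choose i) * w (Suc i) * z (k - i)) + (\<Sum>i\<le>k. real (k choose i) * w i * z (Suc k - i))"
proof -
  have e1: "(\<Sum>i\<le>Suc k. real (Suc k choose i) * w i * z (Suc k - i)) =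
     w 0 * z (Suc k) + (\<Sum>i\<le>k. real (Suc k choose Suc i) * w (Suc i) * z (k - i))"
    by (subst sum.atMost_Suc_shift) simp
  have e2: "(\<Sum>i\<le>k. real (Suc k choose Suc i) * w (Suc i) * z (k - i)) =
     (\<Sum>i\<le>k. real (k choose i) * w (Suc i) * z (k - i)) + (\<Sum>i\<le>k. real (k choose Suc i) * w (Suc i) * z (k - i))"
    by (simp add: sum.distrib algebra_simps)
  have e3: "w 0 * z (Suc k) + (\<Sum>i\<le>k. real (k choose Suc i) * w (Suc i) * z (k - i)) =
      (\<Sum>i\<le>k. real (k choose i) * w i * z (Suc k - i))"
  proof (cases k)
    case 0 then show ?thesis by simp
  next
    case (Suc m)
    have "(\<Sum>i\<le>k. real (k choose i) * w i * z (Suc k - i)) =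
       w 0 * z (Suc k) + (\<Sum>i\<le>m. real (k choose Suc i) * w (Suc i) * z (k - i))"
      unfolding Suc by (subst sum.atMost_Suc_shift) simp
    moreover have "(\<Sum>i\<le>k. real (k choose Suc i) * w (Suc i) * z (k - i)) =
        (\<Sum>i\<le>m. real (k choose Suc i) * w (Suc i) * z (k - i))"
      unfolding Suc by (simp add: sum.atMost_Suc binomial_eq_0 del: binomial_Suc_Suc)
    ultimately show ?thesis by simp
  qed
  show ?thesis using e1 e2 e3 by simp
qed

lemma conv_L1:
  fixes f :: "nat \<Rightarrow> nat \<Rightarrow> real"
  shows "(\<Sum>i\<le>Suc m. real (Suc m choose i) * real i * f (i - 1) (Suc m - i)) =
     real (Suc m) * (\<Sum>i\<le>m. real (m choose i) * f i (m - i))"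
proof -
  have "(\<Sum>i\<le>Suc m. real (Suc m choose i) * real i * f (i - 1) (Suc m - i)) =
     (\<Sum>i\<le>m. real (Suc m choose Suc i) * real (Suc i) * f i (m - i))"
    by (subst sum.atMost_Suc_shift) simp
  also have "\<dots> = (\<Sum>i\<le>m. real (Suc m) * (real (m choose i) * f i (m - i)))"
  proof (rule sum.cong[OF refl])
    fix i
    have "real (Suc m choose Suc i) * real (Suc i) = real (Suc m) * real (m choose i)"
      using Suc_times_binomial_eq[of m i] by (metis of_nat_mult mult.commute)
    then show "real (Suc m choose Suc i) * real (Suc i) * f i (m - i) = real (Suc m) * (real (m choose i) * f i (m - i))"
      by (simp add: mult.assoc[symmetric])
  qed
  finally show ?thesis by (simp add: sum_distrib_left)
qed

lemma conv_L2:
  fixes f :: "nat \<Rightarrow> nat \<Rightarrow> real"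
  shows "(\<Sum>i\<le>Suc m. real (Suc m choose i) * real (Suc m - i) * f i (m - i)) =
     real (Suc m) * (\<Sum>i\<le>m. real (m choose i) * f i (m - i))"
proof -
  have "(\<Sum>i\<le>Suc m. real (Suc m choose i) * real (Suc m - i) * f i (m - i)) =
     (\<Sum>i\<le>m. real (Suc m choose i) * real (Suc m - i) * f i (m - i))"
    by simp
  also have "\<dots> = (\<Sum>i\<le>m. real (Suc m) * (real (m choose i) * f i (m - i)))"
  proof (rule sum.cong[OF refl])
    fix i assume "i \<in> {..m}"
    have "(Suc m - i) * (Suc m choose i) = Suc m * (m choose i)"
      using binomial_absorb_comp[of "Suc m" i] by simp
    then have "real (Suc m choose i) * real (Suc m - i) = real (Suc m) * real (m choose i)"
      by (metis of_nat_mult mult.commute)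
    then show "real (Suc m choose i) * real (Suc m - i) * f i (m - i) = real (Suc m) * (real (m choose i) * f i (m - i))"
      by (simp add: mult.assoc[symmetric])
  qed
  finally show ?thesis by (simp add: sum_distrib_left)
qed

lemma hermite_xrec: "x * hermite i x = hermite (Suc i) x + real i * hermite (i - 1) x"
  by (cases i) auto

lemma hermite_rec2: "hermite (Suc (Suc k)) w = w * hermite (Suc k) w - real (Suc k) * hermite k w"
  by simp

definition hA :: "real \<Rightarrow> real \<Rightarrow> real \<Rightarrow> real \<Rightarrow> nat \<Rightarrow> real" where
  "hA a b x y k = (\<Sum>i\<le>k. real (k choose i) * (a^i * hermite i x) * (b^(k-i) * hermite (k-i) y))"

lemma hA_rec:
  assumes ab: "a\<^sup>2 + b\<^sup>2 = 1"
  shows "(a*x + b*y) * hA a b x y (Suc m) = hA a b x y (Suc (Suc m)) + real (Suc m) * hA a b x y m"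
proof -
  define u where "u i = a^i * hermite i x" for i
  define v where "v i = b^i * hermite i y" for i
  have hAe: "hA a b x y k = (\<Sum>i\<le>k. real (k choose i) * u i * v (k - i))" for k
    by (simp add: hA_def u_def v_def)
  have ux: "a * x * u i = u (Suc i) + a\<^sup>2 * (real i * u (i - 1))" for i
    by (cases i) (auto simp: u_def algebra_simps power2_eq_square)
  have vy: "b * y * v i = v (Suc i) + b\<^sup>2 * (real i * v (i - 1))" for i
    by (cases i) (auto simp: v_def algebra_simps power2_eq_square)
  define k where "k = Suc m"
  have "(a*x + b*y) * hA a b x y k =
      (\<Sum>i\<le>k. real (k choose i) * (a * x * u i) * v (k - i)) +
      (\<Sum>i\<le>k. real (k choose i) * u i * (b * y * v (k - i)))"
    by (simp add: hAe sum_distrib_left sum.distrib algebra_simps)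
  also have "\<dots> = ((\<Sum>i\<le>k. real (k choose i) * u (Suc i) * v (k - i)) +
        (\<Sum>i\<le>k. real (k choose i) * u i * v (Suc (k - i))))
      + (a\<^sup>2 * (\<Sum>i\<le>k. real (k choose i) * real i * (u (i - 1) * v (k - i))) +
         b\<^sup>2 * (\<Sum>i\<le>k. real (k choose i) * real (k - i) * (u i * v (k - i - 1))))"
  proof -
    have s1: "(\<Sum>i\<le>k. real (k choose i) * (a * x * u i) * v (k - i)) =
       (\<Sum>i\<le>k. real (k choose i) * u (Suc i) * v (k - i)) +
       a\<^sup>2 * (\<Sum>i\<le>k. real (k choose i) * real i * (u (i - 1) * v (k - i)))"
      unfolding ux by (simp add: distrib_left distrib_right sum.distrib sum_distrib_left mult_ac)
    have s2: "(\<Sum>i\<le>k. real (k choose i) * u i * (b * y * v (k - i))) =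
       (\<Sum>i\<le>k. real (k choose i) * u i * v (Suc (k - i))) +
       b\<^sup>2 * (\<Sum>i\<le>k. real (k choose i) * real (k - i) * (u i * v (k - i - 1)))"
      unfolding vy by (simp add: distrib_left distrib_right sum.distrib sum_distrib_left mult_ac)
    show ?thesis unfolding s1 s2 by simp
  qed
  also have "(\<Sum>i\<le>k. real (k choose i) * u i * v (Suc (k - i))) =
      (\<Sum>i\<le>k. real (k choose i) * u i * v (Suc k - i))"
    by (intro sum.cong refl) (simp add: Suc_diff_le)
  also have "(\<Sum>i\<le>k. real (k choose i) * u (Suc i) * v (k - i)) +
        (\<Sum>i\<le>k. real (k choose i) * u i * v (Suc k - i)) = hA a b x y (Suc k)"
    unfolding hAe by (rule pascal_conv[symmetric])
  also have "(\<Sum>i\<le>k. real (k choose i) * real i * (u (i - 1) * v (k - i))) = real k * hA a b x y m"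
    using conv_L1[of m "\<lambda>i j. u i * v j"] by (simp add: k_def hAe mult.assoc)
  also have "(\<Sum>i\<le>k. real (k choose i) * real (k - i) * (u i * v (k - i - 1))) = real k * hA a b x y m"
    using conv_L2[of m "\<lambda>i j. u i * v j"] by (simp add: k_def hAe mult.assoc)
  also have "a\<^sup>2 * (real k * hA a b x y m) + b\<^sup>2 * (real k * hA a b x y m) = real k * hA a b x y m"
    using ab by (metis distrib_right mult_1)
  finally show ?thesis by (simp add: k_def)
qed

lemma hermite_addition:
  assumes ab: "a\<^sup>2 + b\<^sup>2 = 1"
  shows "hermite k (a*x + b*y) = hA a b x y k"
proof -
  have "hermite k (a*x + b*y) = hA a b x y k \<and> hermite (Suc k) (a*x + b*y) = hA a b x y (Suc k)"
  proof (induction k)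
    case 0
    then show ?case by (simp add: hA_def)
  next
    case (Suc k)
    have "hermite (Suc (Suc k)) (a*x + b*y) = (a*x+b*y) * hA a b x y (Suc k) - real (Suc k) * hA a b x y k"
      using Suc by (simp only: hermite_rec2)
    also have "\<dots> = hA a b x y (Suc (Suc k))" using hA_rec[OF ab, of x y k] by simp
    finally show ?case using Suc by simp
  qed
  then show ?thesis by simp
qed


lemma gauss_prob: "prob_space gauss_measure"
  unfolding gauss_measure_def by (rule prob_space_normal_density) simp

lemma space_gauss[simp]: "space gauss_measure = UNIV"
  by (simp add: gauss_measure_def)

lemma sets_gauss[simp]: "sets gauss_measure = sets borel"
  by (simp add: gauss_measure_def)

lemma measurable_gauss1[simp]: "measurable gauss_measure N = measurable borel N"
  by (rule measurable_cong_sets) auto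

lemma poly_borel[measurable]: "poly (p::real poly) \<in> borel_measurable borel"
  using continuous_on_poly[OF continuous_on_id, of UNIV p] by (intro borel_measurable_continuous_onI) simp

lemma gauss_integrable_iff:
  fixes g :: "real \<Rightarrow> real"
  assumes [measurable]: "g \<in> borel_measurable borel"
  shows "integrable gauss_measure g \<longleftrightarrow> integrable lborel (\<lambda>x. std_normal_density x * g x)"
  unfolding gauss_measure_def by (subst integrable_density) auto

lemma gauss_integral:
  fixes g :: "real \<Rightarrow> real"
  assumes [measurable]: "g \<in> borel_measurable borel"
  shows "integral\<^sup>L gauss_measure g = (\<integral>x. std_normal_density x * g x \<partial>lborel)"
  unfolding gauss_measure_def by (subst integral_density) auto

lemma gauss_moment_int: "integrable gauss_measure (\<lambda>x. x ^ n)"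
  by (subst gauss_integrable_iff) (auto intro: integrable_std_normal_moment)

lemma gauss_moment: "(\<integral>x. x ^ n \<partial>gauss_measure) = gm n"
proof (cases "even n")
  case True
  then obtain k where n: "n = 2 * k" by blast
  show ?thesis
    using integral_std_normal_moment_even[of k] n by (simp add: gauss_integral gm_def)
next
  case False
  then obtain k where n: "n = 2 * k + 1" by (metis oddE)
  show ?thesis
    using integral_std_normal_moment_odd[of k] n by (simp add: gauss_integral gm_def)
qed

lemma gauss_poly_int: "integrable gauss_measure (poly p)"
proof -
  have "integrable gauss_measure (\<lambda>x. \<Sum>i\<le>degree p. coeff p i * x ^ i)"
    by (rule Bochner_Integration.integrable_sum) (auto intro!: integrable_mult_right gauss_moment_int)
  moreover have "poly p = (\<lambda>x. \<Sum>i\<le>degree p. coeff p i * x ^ i)" by (simp add: fun_eq_iff poly_altdef)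
  ultimately show ?thesis by simp
qed

lemma gauss_poly: "(\<integral>x. poly p x \<partial>gauss_measure) = Eg p"
proof -
  have "(\<integral>x. poly p x \<partial>gauss_measure) = (\<integral>x. (\<Sum>i\<le>degree p. coeff p i * x ^ i) \<partial>gauss_measure)"
    by (simp add: poly_altdef)
  also have "\<dots> = (\<Sum>i\<le>degree p. coeff p i * gm i)"
    by (subst Bochner_Integration.integral_sum) (auto intro!: integrable_mult_right gauss_moment_int simp: gauss_moment)
  finally show ?thesis by (simp add: Eg_def)
qed

lemma hermite_borel[measurable]: "hermite k \<in> borel_measurable borel"
proof -
  have "(\<lambda>x. poly (hp k) x) \<in> borel_measurable borel" by measurable
  then show ?thesis by (simp add: poly_hp[abs_def])
qed

lemma gauss_hermite_orth: "(\<integral>x. hermite j x * hermite k x \<partial>gauss_measure) = (if j = k then fact k else 0)"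
  using gauss_poly[of "hp j * hp k"] by (simp add: poly_hp Eg_hp_orth)

lemma gauss_hermite_prod_int: "integrable gauss_measure (\<lambda>x. hermite j x * hermite k x)"
proof -
  have "poly (hp j * hp k) = (\<lambda>x. hermite j x * hermite k x)" by (simp add: fun_eq_iff poly_mult poly_hp)
  then show ?thesis using gauss_poly_int[of "hp j * hp k"] by simp
qed

lemma std_transfer:
  fixes g :: "real \<Rightarrow> real"
  assumes D: "distributed M lborel W std_normal_density"
    and [measurable]: "g \<in> borel_measurable borel"
  shows "integrable M (\<lambda>\<omega>. g (W \<omega>)) \<longleftrightarrow> integrable gauss_measure g"
    and "(\<integral>\<omega>. g (W \<omega>) \<partial>M) = integral\<^sup>L gauss_measure g"
  using distributed_integrable[OF D, of g] distributed_integral[OF D, of g]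
  by (auto simp: gauss_integrable_iff gauss_integral)


lemma sum_even_reindex:
  fixes f :: "nat \<Rightarrow> real"
  assumes "\<And>p. odd p \<Longrightarrow> f p = 0"
  shows "(\<Sum>p\<le>2*m. f p) = (\<Sum>i\<le>m. f (2*i))"
proof (induction m)
  case 0 then show ?case by simp
next
  case (Suc m)
  have "(\<Sum>p\<le>2*Suc m. f p) = (\<Sum>p\<le>2*m. f p) + f (Suc (2*m)) + f (Suc (Suc (2*m)))"
    by (simp add: sum.atMost_Suc)
  also have "f (Suc (2*m)) = 0" by (rule assms) simp
  finally show ?case using Suc by (simp add: sum.atMost_Suc)
qed

lemma gm_binom_even:
  assumes "i \<le> m"
  shows "real (2*m choose 2*i) * gm (2*i) * gm (2*m - 2*i) = real (m choose i) * gm (2*m)"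
proof -
  have e: "2*m - 2*i = 2*(m-i)" by simp
  have c1: "real (2*m choose 2*i) = fact (2*m) / (fact (2*i) * fact (2*(m-i)))"
    using assms by (subst binomial_fact) (auto simp: e)
  have c2: "real (m choose i) = fact m / (fact i * fact (m-i))"
    using assms by (subst binomial_fact) auto
  have p: "(2::real)^m = 2^i * 2^(m-i)" using assms by (simp add: power_add[symmetric])
  have g1: "gm (2*i) = fact (2*i) / (2^i * fact i)" by (simp add: gm_def)
  have g2: "gm (2*(m-i)) = fact (2*(m-i)) / (2^(m-i) * fact (m-i))" by (simp add: gm_def)
  have g3: "gm (2*m) = fact (2*m) / (2^m * fact m)" by (simp add: gm_def)
  have nz: "fact (2*i) \<noteq> (0::real)" "fact (2*(m-i)) \<noteq> (0::real)" "fact m \<noteq> (0::real)" "fact i \<noteq> (0::real)" "fact (m-i) \<noteq> (0::real)"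
    by auto
  show ?thesis
    unfolding e c1 c2 g1 g2 g3 p using nz
    by (simp add: divide_simps)
qed

lemma gauss_pair_identity:
  "sqrt (a\<^sup>2 + 1) ^ n * gm n = (\<Sum>p\<le>n. real (n choose p) * a ^ p * (gm p * gm (n - p)))"
proof (cases "even n")
  case False
  have "gm p * gm (n - p) = 0" if "p \<le> n" for p
    using False that by (cases "even p") (auto simp: gm_def)
  then have "(\<Sum>p\<le>n. real (n choose p) * a ^ p * (gm p * gm (n - p))) = 0"
    by (intro sum.neutral) auto
  moreover have "gm n = 0" using False by (simp add: gm_def)
  ultimately show ?thesis by simp
next
  case True
  then obtain m where n: "n = 2*m" by blast
  have "sqrt (a\<^sup>2 + 1) ^ n = (a\<^sup>2 + 1) ^ m"
    by (simp add: n power_mult)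
  also have "\<dots> = (\<Sum>i\<le>m. real (m choose i) * (a\<^sup>2)^i)"
    by (subst binomial_ring) simp
  finally have l: "sqrt (a\<^sup>2 + 1) ^ n * gm n = (\<Sum>i\<le>m. real (m choose i) * a^(2*i) * gm (2*m))"
    by (simp add: sum_distrib_right n power_mult)
  have "(\<Sum>p\<le>n. real (n choose p) * a ^ p * (gm p * gm (n - p))) =
      (\<Sum>i\<le>m. real (2*m choose 2*i) * a ^ (2*i) * (gm (2*i) * gm (2*m - 2*i)))"
    unfolding n by (rule sum_even_reindex) (simp add: gm_def)
  also have "\<dots> = (\<Sum>i\<le>m. real (m choose i) * a^(2*i) * gm (2*m))"
  proof (rule sum.cong[OF refl])
    fix i assume "i \<in> {..m}"
    then have "i \<le> m" by simp
    from gm_binom_even[OF this] show "real (2*m choose 2*i) * a ^ (2*i) * (gm (2*i) * gm (2*m - 2*i)) =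
       real (m choose i) * a^(2*i) * gm (2*m)"
      by (metis (no_types, lifting) mult.assoc mult.commute)
  qed
  finally show ?thesis using l by simp
qed

lemma abs_prod_le_sq: "\<bar>(x::real) * y\<bar> \<le> x\<^sup>2 + y\<^sup>2"
proof -
  have "0 \<le> (\<bar>x\<bar> - \<bar>y\<bar>)\<^sup>2" by simp
  then have "2 * (\<bar>x\<bar> * \<bar>y\<bar>) \<le> x\<^sup>2 + y\<^sup>2" by (simp add: power2_eq_square algebra_simps)
  moreover have "0 \<le> \<bar>x\<bar> * \<bar>y\<bar>" by simp
  ultimately show ?thesis by (simp only: abs_mult)
qed

locale gpair = prob_space M for M :: "'a measure" +
  fixes U Z :: "'a \<Rightarrow> real"
  assumes DU: "distributed M lborel U std_normal_density"
    and DZ: "distributed M lborel Z std_normal_density"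
    and DW: "\<And>a. distributed M lborel (\<lambda>\<omega>. a * U \<omega> + Z \<omega>) (normal_density 0 (sqrt (a\<^sup>2 + 1)))"
begin

lemma U_meas[measurable]: "U \<in> borel_measurable M"
  using DU by (auto dest: distributed_measurable)
lemma Z_meas[measurable]: "Z \<in> borel_measurable M"
  using DZ by (auto dest: distributed_measurable)

lemma U_pow_int: "integrable M (\<lambda>\<omega>. U \<omega> ^ n)"
  using std_transfer(1)[OF DU, of "\<lambda>x. x^n"] gauss_moment_int by simp
lemma Z_pow_int: "integrable M (\<lambda>\<omega>. Z \<omega> ^ n)"
  using std_transfer(1)[OF DZ, of "\<lambda>x. x^n"] gauss_moment_int by simp

lemma UZ_int: "integrable M (\<lambda>\<omega>. U \<omega> ^ p * Z \<omega> ^ q)"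
proof (rule Bochner_Integration.integrable_bound)
  show "integrable M (\<lambda>\<omega>. U \<omega> ^ (2*p) + Z \<omega> ^ (2*q))"
    by (intro Bochner_Integration.integrable_add U_pow_int Z_pow_int)
  show "AE \<omega> in M. norm (U \<omega> ^ p * Z \<omega> ^ q) \<le> norm (U \<omega> ^ (2*p) + Z \<omega> ^ (2*q))"
  proof (intro AE_I2)
    fix \<omega>
    have "\<bar>U \<omega> ^ p * Z \<omega> ^ q\<bar> \<le> (U \<omega> ^ p)\<^sup>2 + (Z \<omega> ^ q)\<^sup>2"
      by (rule abs_prod_le_sq)
    then show "norm (U \<omega> ^ p * Z \<omega> ^ q) \<le> norm (U \<omega> ^ (2*p) + Z \<omega> ^ (2*q))"
      by (simp add: power_even_eq)
  qed
qed simp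

lemma W_moment: "(\<integral>\<omega>. (a * U \<omega> + Z \<omega>) ^ n \<partial>M) = sqrt (a\<^sup>2 + 1) ^ n * gm n"
proof -
  define s where "s = sqrt (a\<^sup>2 + 1)"
  have "0 < a\<^sup>2 + 1" using zero_le_power2[of a] by linarith
  then have s: "s > 0" unfolding s_def by simp
  have D: "distributed M lborel (\<lambda>\<omega>. (a * U \<omega> + Z \<omega> - 0) / s) std_normal_density"
    using normal_standard_normal_convert[OF s] DW[of a] by (simp add: s_def)
  have "(\<integral>\<omega>. ((a * U \<omega> + Z \<omega> - 0) / s) ^ n \<partial>M) = gm n"
    using std_transfer(2)[OF D, of "\<lambda>x. x^n"] by (simp add: gauss_moment)
  moreover have "(\<lambda>\<omega>. (a * U \<omega> + Z \<omega>) ^ n) = (\<lambda>\<omega>. s ^ n * ((a * U \<omega> + Z \<omega> - 0) / s) ^ n)"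
    using s by (simp add: fun_eq_iff power_divide)
  ultimately show ?thesis by (simp add: s_def)
qed

lemma W_expand: "(\<integral>\<omega>. (a * U \<omega> + Z \<omega>) ^ n \<partial>M) =
   (\<Sum>p\<le>n. real (n choose p) * a ^ p * (\<integral>\<omega>. U \<omega> ^ p * Z \<omega> ^ (n - p) \<partial>M))"
proof -
  have "(\<lambda>\<omega>. (a * U \<omega> + Z \<omega>) ^ n) = (\<lambda>\<omega>. \<Sum>p\<le>n. real (n choose p) * a ^ p * (U \<omega> ^ p * Z \<omega> ^ (n - p)))"
    by (simp add: fun_eq_iff binomial_ring power_mult_distrib mult_ac)
  then show ?thesis
    by (simp add: Bochner_Integration.integral_sum UZ_int)
qed

lemma UZ_moment: "(\<integral>\<omega>. U \<omega> ^ p * Z \<omega> ^ q \<partial>M) = gm p * gm q"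
proof -
  define n where "n = p + q"
  have "\<forall>a. (\<Sum>j\<le>n. (real (n choose j) * (\<integral>\<omega>. U \<omega> ^ j * Z \<omega> ^ (n - j) \<partial>M)) * a ^ j) =
            (\<Sum>j\<le>n. (real (n choose j) * (gm j * gm (n - j))) * a ^ j)"
  proof
    fix a
    have "(\<Sum>j\<le>n. (real (n choose j) * (\<integral>\<omega>. U \<omega> ^ j * Z \<omega> ^ (n - j) \<partial>M)) * a ^ j) =
        (\<integral>\<omega>. (a * U \<omega> + Z \<omega>) ^ n \<partial>M)"
      by (simp add: W_expand mult_ac)
    also have "\<dots> = (\<Sum>j\<le>n. (real (n choose j) * (gm j * gm (n - j))) * a ^ j)"
      unfolding W_moment gauss_pair_identity by (intro sum.cong) (simp_all add: mult_ac)
    finally show "(\<Sum>j\<le>n. (real (n choose j) * (\<integral>\<omega>. U \<omega> ^ j * Z \<omega> ^ (n - j) \<partial>M)) * a ^ j) =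
            (\<Sum>j\<le>n. (real (n choose j) * (gm j * gm (n - j))) * a ^ j)" .
  qed
  then have "real (n choose p) * (\<integral>\<omega>. U \<omega> ^ p * Z \<omega> ^ (n - p) \<partial>M) = real (n choose p) * (gm p * gm (n - p))"
    unfolding polyfun_eq_coeffs n_def by (meson le_add1)
  moreover have "real (n choose p) \<noteq> 0" by (simp add: n_def)
  ultimately show ?thesis by (simp add: n_def)
qed

lemma poly_pair:
  "integrable M (\<lambda>\<omega>. poly f (U \<omega>) * poly g (Z \<omega>))"
  "(\<integral>\<omega>. poly f (U \<omega>) * poly g (Z \<omega>) \<partial>M) = Eg f * Eg g"
proof -
  have e: "(\<lambda>\<omega>. poly f (U \<omega>) * poly g (Z \<omega>)) =
     (\<lambda>\<omega>. \<Sum>i\<le>degree f. \<Sum>j\<le>degree g. coeff f i * coeff g j * (U \<omega> ^ i * Z \<omega> ^ j))"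
  proof
    fix \<omega>
    show "poly f (U \<omega>) * poly g (Z \<omega>) =
      (\<Sum>i\<le>degree f. \<Sum>j\<le>degree g. coeff f i * coeff g j * (U \<omega> ^ i * Z \<omega> ^ j))"
      unfolding poly_altdef sum_product by (intro sum.cong refl) (simp add: mult_ac)
  qed
  have i1: "integrable M (\<lambda>\<omega>. \<Sum>j\<le>degree g. coeff f i * coeff g j * (U \<omega> ^ i * Z \<omega> ^ j))" for i
    by (intro Bochner_Integration.integrable_sum Bochner_Integration.integrable_mult_right UZ_int)
  show "integrable M (\<lambda>\<omega>. poly f (U \<omega>) * poly g (Z \<omega>))"
    unfolding e by (intro Bochner_Integration.integrable_sum i1)
  have "(\<integral>\<omega>. poly f (U \<omega>) * poly g (Z \<omega>) \<partial>M) =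
     (\<Sum>i\<le>degree f. \<Sum>j\<le>degree g. coeff f i * coeff g j * (gm i * gm j))"
    unfolding e
    apply (subst Bochner_Integration.integral_sum)
     apply (rule i1)
    apply (intro sum.cong refl)
    apply (subst Bochner_Integration.integral_sum)
     apply (intro Bochner_Integration.integrable_mult_right UZ_int)
    apply (intro sum.cong refl)
    apply (simp add: UZ_moment)
    done
  also have "\<dots> = Eg f * Eg g"
    unfolding Eg_def sum_product by (intro sum.cong refl) (simp add: mult_ac)
  finally show "(\<integral>\<omega>. poly f (U \<omega>) * poly g (Z \<omega>) \<partial>M) = Eg f * Eg g" .
qed

end


lemma (in prob_space) cg_normal:
  assumes cg: "centered_gaussian_rv M W"
    and int: "integrable M (\<lambda>\<omega>. (W \<omega>)\<^sup>2)"
    and v: "(\<integral>\<omega>. (W \<omega>)\<^sup>2 \<partial>M) = v" and vpos: "v > 0"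
  shows "distributed M lborel W (normal_density 0 (sqrt v))"
proof -
  from cg have "(AE \<omega> in M. W \<omega> = 0) \<or> (\<exists>\<sigma>>0. distributed M lborel W (normal_density 0 \<sigma>))"
    unfolding centered_gaussian_rv_def by blast
  then show ?thesis
  proof
    assume "AE \<omega> in M. W \<omega> = 0"
    then have "AE \<omega> in M. (W \<omega>)\<^sup>2 = 0" by eventually_elim simp
    then have "(\<integral>\<omega>. (W \<omega>)\<^sup>2 \<partial>M) = (\<integral>\<omega>. 0 \<partial>M)" by (rule integral_cong_AE[rotated 2]) (use cg in \<open>auto simp: centered_gaussian_rv_def\<close>)
    then show ?thesis using v vpos by simp
  next
    assume "\<exists>\<sigma>>0. distributed M lborel W (normal_density 0 \<sigma>)"
    then obtain \<sigma> where s: "\<sigma> > 0" and D: "distributed M lborel W (normal_density 0 \<sigma>)" by blast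
    have "variance W = \<sigma>\<^sup>2" by (rule normal_distributed_variance[OF s D])
    moreover have "expectation W = 0" by (rule normal_distributed_expectation[OF s D])
    ultimately have "\<sigma>\<^sup>2 = v" using v by simp
    then have "\<sigma> = sqrt v" using s by (metis abs_of_pos real_sqrt_abs)
    then show ?thesis using D by simp
  qed
qed

lemma abs_prod_le_sq': "\<bar>(x::real) * y\<bar> \<le> x * x + y * y"
  using abs_prod_le_sq[of x y] by (simp add: power2_eq_square)

locale gproc = prob_space M for M :: "'a measure" +
  fixes X :: "int \<Rightarrow> 'a \<Rightarrow> real" and r :: "int \<Rightarrow> real"
  assumes gp: "centered_gaussian_process M X"
    and cov: "\<And>i t. (\<integral>\<omega>. X i \<omega> * X (i + t) \<omega> \<partial>M) = r t"
    and r0: "r 0 = 1"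
begin

lemma cg_comb: "finite S \<Longrightarrow> centered_gaussian_rv M (\<lambda>\<omega>. \<Sum>i\<in>S. a i * X i \<omega>)"
  using gp unfolding centered_gaussian_process_def by blast

lemma X_meas[measurable]: "X i \<in> borel_measurable M"
  using cg_comb[of "{i}" "\<lambda>_. 1"] by (simp add: centered_gaussian_rv_def)

lemma XX_sq_int: "integrable M (\<lambda>\<omega>. X i \<omega> * X i \<omega>)"
proof (rule ccontr)
  assume "\<not> ?thesis"
  then have "(\<integral>\<omega>. X i \<omega> * X i \<omega> \<partial>M) = 0" by (rule not_integrable_integral_eq)
  moreover have "(\<integral>\<omega>. X i \<omega> * X i \<omega> \<partial>M) = 1" using cov[of i 0] r0 by simp
  ultimately show False by simp
qed

lemma XX_int: "integrable M (\<lambda>\<omega>. X i \<omega> * X j \<omega>)"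
proof (rule Bochner_Integration.integrable_bound)
  show "integrable M (\<lambda>\<omega>. X i \<omega> * X i \<omega> + X j \<omega> * X j \<omega>)"
    by (intro Bochner_Integration.integrable_add XX_sq_int)
  show "AE \<omega> in M. norm (X i \<omega> * X j \<omega>) \<le> norm (X i \<omega> * X i \<omega> + X j \<omega> * X j \<omega>)"
    using abs_prod_le_sq' by (intro AE_I2) (simp add: abs_of_nonneg add_nonneg_nonneg)
qed simp

lemma XX_integral: "(\<integral>\<omega>. X i \<omega> * X j \<omega> \<partial>M) = r (j - i)"
  using cov[of i "j - i"] by simp

lemma X_std: "distributed M lborel (X i) std_normal_density"
proof -
  have "distributed M lborel (\<lambda>\<omega>. \<Sum>k\<in>{i}. 1 * X k \<omega>) (normal_density 0 (sqrt 1))"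
    by (rule cg_normal[OF cg_comb]) (use XX_sq_int[of i] XX_integral[of i i] r0 in \<open>simp_all add: power2_eq_square\<close>)
  then show ?thesis by simp
qed

lemma pair:
  assumes t: "t \<noteq> 0" and rt: "\<bar>r t\<bar> < 1"
  shows "gpair M (X 0) (\<lambda>\<omega>. (X t \<omega> - r t * X 0 \<omega>) / sqrt (1 - (r t)\<^sup>2))"
proof -
  define \<rho> where "\<rho> = r t"
  define s where "s = sqrt (1 - \<rho>\<^sup>2)"
  have "\<rho>\<^sup>2 < 1" using rt unfolding \<rho>_def by (simp add: abs_square_less_1)
  then have s2: "s\<^sup>2 = 1 - \<rho>\<^sup>2" and spos: "s > 0" unfolding s_def by simp_all
  have DW: "distributed M lborel (\<lambda>\<omega>. a * X 0 \<omega> + (X t \<omega> - \<rho> * X 0 \<omega>) / s) (normal_density 0 (sqrt (a\<^sup>2 + 1)))" for a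
  proof -
    define c0 where "c0 = a - \<rho> / s"
    define c1 where "c1 = 1 / s"
    define cf where "cf = (\<lambda>i::int. if i = 0 then c0 else c1)"
    have eqW: "(\<lambda>\<omega>. a * X 0 \<omega> + (X t \<omega> - \<rho> * X 0 \<omega>) / s) = (\<lambda>\<omega>. \<Sum>k\<in>{0, t}. cf k * X k \<omega>)"
      using t spos by (auto simp: fun_eq_iff cf_def c0_def c1_def field_simps)
    have sq: "(\<lambda>\<omega>. (\<Sum>k\<in>{0, t}. cf k * X k \<omega>)\<^sup>2) =
       (\<lambda>\<omega>. c0\<^sup>2 * (X 0 \<omega> * X 0 \<omega>) + 2 * c0 * c1 * (X 0 \<omega> * X t \<omega>) + c1\<^sup>2 * (X t \<omega> * X t \<omega>))"
      using t by (auto simp: fun_eq_iff cf_def power2_eq_square algebra_simps)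
    have int: "integrable M (\<lambda>\<omega>. (\<Sum>k\<in>{0, t}. cf k * X k \<omega>)\<^sup>2)"
      unfolding sq by (intro Bochner_Integration.integrable_add Bochner_Integration.integrable_mult_right XX_int)
    have "(\<integral>\<omega>. (\<Sum>k\<in>{0, t}. cf k * X k \<omega>)\<^sup>2 \<partial>M) = c0\<^sup>2 + 2 * c0 * c1 * \<rho> + c1\<^sup>2"
      unfolding sq
      by (simp add: XX_int XX_integral r0 \<rho>_def Bochner_Integration.integral_add
          Bochner_Integration.integrable_add)
    also have "\<dots> = a\<^sup>2 + (1 - \<rho>\<^sup>2) / s\<^sup>2"
      using spos unfolding c0_def c1_def by (simp add: field_simps power2_eq_square)
    also have "\<dots> = a\<^sup>2 + 1" using spos by (simp add: s2[symmetric])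
    finally have v: "(\<integral>\<omega>. (\<Sum>k\<in>{0, t}. cf k * X k \<omega>)\<^sup>2 \<partial>M) = a\<^sup>2 + 1" .
    have "0 < a\<^sup>2 + 1" using zero_le_power2[of a] by linarith
    from cg_normal[OF cg_comb int v this] eqW show ?thesis by simp
  qed
  show ?thesis
  proof unfold_locales
    show "distributed M lborel (X 0) std_normal_density" by (rule X_std)
    show "distributed M lborel (\<lambda>\<omega>. a * X 0 \<omega> + (X t \<omega> - r t * X 0 \<omega>) / sqrt (1 - (r t)\<^sup>2))
        (normal_density 0 (sqrt (a\<^sup>2 + 1)))" for a
      using DW[of a] by (simp add: \<rho>_def s_def)
    show "distributed M lborel (\<lambda>\<omega>. (X t \<omega> - r t * X 0 \<omega>) / sqrt (1 - (r t)\<^sup>2)) std_normal_density"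
      using DW[of 0] by (simp add: \<rho>_def s_def)
  qed
qed

end


context gpair
begin

lemma herm_cross:
  assumes ab: "\<rho>\<^sup>2 + s\<^sup>2 = 1"
  shows "integrable M (\<lambda>\<omega>. hermite j (U \<omega>) * hermite k (\<rho> * U \<omega> + s * Z \<omega>))"
    and "(\<integral>\<omega>. hermite j (U \<omega>) * hermite k (\<rho> * U \<omega> + s * Z \<omega>) \<partial>M) = (if j = k then fact k * \<rho> ^ k else 0)"
proof -
  have e: "(\<lambda>\<omega>. hermite j (U \<omega>) * hermite k (\<rho> * U \<omega> + s * Z \<omega>)) =
    (\<lambda>\<omega>. \<Sum>i\<le>k. real (k choose i) * \<rho> ^ i * s ^ (k - i) * (poly (hp j * hp i) (U \<omega>) * poly (hp (k - i)) (Z \<omega>)))"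
  proof
    fix \<omega>
    show "hermite j (U \<omega>) * hermite k (\<rho> * U \<omega> + s * Z \<omega>) =
      (\<Sum>i\<le>k. real (k choose i) * \<rho> ^ i * s ^ (k - i) * (poly (hp j * hp i) (U \<omega>) * poly (hp (k - i)) (Z \<omega>)))"
      unfolding hermite_addition[OF ab] hA_def sum_distrib_left
      by (intro sum.cong refl) (simp add: poly_mult poly_hp mult_ac)
  qed
  show "integrable M (\<lambda>\<omega>. hermite j (U \<omega>) * hermite k (\<rho> * U \<omega> + s * Z \<omega>))"
    unfolding e by (intro Bochner_Integration.integrable_sum Bochner_Integration.integrable_mult_right poly_pair)
  have "(\<integral>\<omega>. hermite j (U \<omega>) * hermite k (\<rho> * U \<omega> + s * Z \<omega>) \<partial>M) =
    (\<Sum>i\<le>k. real (k choose i) * \<rho> ^ i * s ^ (k - i) * (Eg (hp j * hp i) * Eg (hp (k - i))))"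
    unfolding e
    apply (subst Bochner_Integration.integral_sum)
     apply (intro Bochner_Integration.integrable_mult_right poly_pair)
    apply (intro sum.cong refl)
    apply (subst Bochner_Integration.integral_mult_right_zero)
    apply (simp only: poly_pair(2))
    done
  also have "\<dots> = (\<Sum>i\<in>{k}. real (k choose i) * \<rho> ^ i * s ^ (k - i) * (Eg (hp j * hp i) * Eg (hp (k - i))))"
    by (rule sum.mono_neutral_right) (auto simp: Eg_hp)
  also have "\<dots> = (if j = k then fact k * \<rho> ^ k else 0)"
    by (simp add: Eg_hp Eg_hp_orth)
  finally show "(\<integral>\<omega>. hermite j (U \<omega>) * hermite k (\<rho> * U \<omega> + s * Z \<omega>) \<partial>M) = (if j = k then fact k * \<rho> ^ k else 0)" .
qed

end

context gproc
begin

lemma herm_cross_X: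
  assumes t: "t \<noteq> 0" and rt: "\<bar>r t\<bar> < 1"
  shows "integrable M (\<lambda>\<omega>. hermite j (X 0 \<omega>) * hermite k (X t \<omega>))"
    and "(\<integral>\<omega>. hermite j (X 0 \<omega>) * hermite k (X t \<omega>) \<partial>M) = (if j = k then fact k * r t ^ k else 0)"
proof -
  define s where "s = sqrt (1 - (r t)\<^sup>2)"
  have "(r t)\<^sup>2 < 1" using rt by (simp add: abs_square_less_1)
  then have s2: "s\<^sup>2 = 1 - (r t)\<^sup>2" and spos: "s > 0" unfolding s_def by simp_all
  interpret gp: gpair M "X 0" "\<lambda>\<omega>. (X t \<omega> - r t * X 0 \<omega>) / s"
    unfolding s_def by (rule pair[OF t rt])
  have ab: "(r t)\<^sup>2 + s\<^sup>2 = 1" using s2 by simp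
  have eq: "r t * X 0 \<omega> + s * ((X t \<omega> - r t * X 0 \<omega>) / s) = X t \<omega>" for \<omega>
    using spos by simp
  show "integrable M (\<lambda>\<omega>. hermite j (X 0 \<omega>) * hermite k (X t \<omega>))"
    using gp.herm_cross(1)[OF ab, of j k] by (simp only: eq)
  show "(\<integral>\<omega>. hermite j (X 0 \<omega>) * hermite k (X t \<omega>) \<partial>M) = (if j = k then fact k * r t ^ k else 0)"
    using gp.herm_cross(2)[OF ab, of j k] by (simp only: eq)
qed

end


definition sqi :: "'b measure \<Rightarrow> ('b \<Rightarrow> real) \<Rightarrow> bool" where
  "sqi N f \<longleftrightarrow> f \<in> borel_measurable N \<and> integrable N (\<lambda>x. (f x)\<^sup>2)"

lemma sqiD[measurable_dest]: "sqi N f \<Longrightarrow> f \<in> borel_measurable N"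
  by (simp add: sqi_def)

lemma sqi_sq: "sqi N f \<Longrightarrow> integrable N (\<lambda>x. (f x)\<^sup>2)"
  by (simp add: sqi_def)

lemma sqi_prod: "sqi N f \<Longrightarrow> sqi N g \<Longrightarrow> integrable N (\<lambda>x. f x * g x)"
proof -
  assume f: "sqi N f" and g: "sqi N g"
  show ?thesis
  proof (rule Bochner_Integration.integrable_bound)
    show "integrable N (\<lambda>x. (f x)\<^sup>2 + (g x)\<^sup>2)"
      using f g by (intro Bochner_Integration.integrable_add) (auto simp: sqi_def)
    show "AE x in N. norm (f x * g x) \<le> norm ((f x)\<^sup>2 + (g x)\<^sup>2)"
      using abs_prod_le_sq by (intro AE_I2) simp
  qed (use f g in \<open>auto simp: sqi_def\<close>)
qed

lemma sqi_add: "sqi N f \<Longrightarrow> sqi N g \<Longrightarrow> sqi N (\<lambda>x. f x + g x)"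
proof -
  assume f: "sqi N f" and g: "sqi N g"
  have "(\<lambda>x. (f x + g x)\<^sup>2) = (\<lambda>x. (f x)\<^sup>2 + 2 * (f x * g x) + (g x)\<^sup>2)"
    by (simp add: fun_eq_iff power2_eq_square algebra_simps)
  then show ?thesis using f g sqi_prod[OF f g]
    by (auto simp: sqi_def intro!: Bochner_Integration.integrable_add Bochner_Integration.integrable_mult_right)
qed

lemma sqi_cmult: "sqi N f \<Longrightarrow> sqi N (\<lambda>x. c * f x)"
  by (auto simp: sqi_def power_mult_distrib intro!: Bochner_Integration.integrable_mult_right)

lemma sqi_minus: "sqi N f \<Longrightarrow> sqi N (\<lambda>x. - f x)"
  by (auto simp: sqi_def)

lemma sqi_diff: "sqi N f \<Longrightarrow> sqi N g \<Longrightarrow> sqi N (\<lambda>x. f x - g x)"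
  using sqi_add[of N f "\<lambda>x. - g x"] sqi_minus[of N g] by simp

lemma sqi_sum: "finite I \<Longrightarrow> (\<And>i. i \<in> I \<Longrightarrow> sqi N (f i)) \<Longrightarrow> sqi N (\<lambda>x. \<Sum>i\<in>I. f i x)"
proof (induction I rule: finite_induct)
  case empty then show ?case by (simp add: sqi_def)
next
  case (insert a I)
  then show ?case by (simp add: sqi_add)
qed

lemma sqi_nonneg: "0 \<le> (\<integral>x. ((f::_\<Rightarrow>real) x)\<^sup>2 \<partial>N)"
  by (rule Bochner_Integration.integral_nonneg) simp

lemma cauchy_schwarz_sqi:
  assumes f: "sqi N f" and g: "sqi N g"
  shows "(\<integral>x. f x * g x \<partial>N)\<^sup>2 \<le> (\<integral>x. (f x)\<^sup>2 \<partial>N) * (\<integral>x. (g x)\<^sup>2 \<partial>N)"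
proof -
  define A where "A = (\<integral>x. (f x)\<^sup>2 \<partial>N)"
  define B where "B = (\<integral>x. f x * g x \<partial>N)"
  define C where "C = (\<integral>x. (g x)\<^sup>2 \<partial>N)"
  have quad: "0 \<le> A - 2 * l * B + l\<^sup>2 * C" for l
  proof -
    have "sqi N (\<lambda>x. f x - l * g x)" using f g by (intro sqi_diff sqi_cmult)
    have "0 \<le> (\<integral>x. (f x - l * g x)\<^sup>2 \<partial>N)" by (rule sqi_nonneg)
    also have "(\<lambda>x. (f x - l * g x)\<^sup>2) = (\<lambda>x. (f x)\<^sup>2 - 2 * l * (f x * g x) + l\<^sup>2 * (g x)\<^sup>2)"
      by (simp add: fun_eq_iff power2_eq_square algebra_simps)
    also have "(\<integral>x. (f x)\<^sup>2 - 2 * l * (f x * g x) + l\<^sup>2 * (g x)\<^sup>2 \<partial>N) = A - 2 * l * B + l\<^sup>2 * C"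
      using sqi_prod[OF f g] f g unfolding A_def B_def C_def
      by (simp add: sqi_def Bochner_Integration.integral_add Bochner_Integration.integral_diff
          Bochner_Integration.integrable_diff Bochner_Integration.integrable_mult_right)
    finally show ?thesis .
  qed
  have C0: "C \<ge> 0" unfolding C_def by (rule sqi_nonneg)
  show ?thesis
  proof (cases "C = 0")
    case False
    then have Cp: "C > 0" using C0 by simp
    have "0 \<le> A - 2 * (B / C) * B + (B / C)\<^sup>2 * C" by (rule quad)
    also have "\<dots> = A - B\<^sup>2 / C" using Cp by (simp add: field_simps power2_eq_square)
    finally have "B\<^sup>2 \<le> A * C" using Cp by (simp add: field_simps)
    then show ?thesis unfolding A_def B_def C_def .
  next
    case True
    have "B = 0"
    proof (rule ccontr)
      assume "B \<noteq> 0"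
      have "0 \<le> A - 2 * ((A + 1) / (2 * B)) * B + ((A + 1) / (2 * B))\<^sup>2 * C" by (rule quad)
      also have "\<dots> = -1" using True \<open>B \<noteq> 0\<close> by (simp add: field_simps)
      finally show False by simp
    qed
    then show ?thesis unfolding A_def B_def C_def using True C_def by simp
  qed
qed


definition hsum :: "(nat \<Rightarrow> real) \<Rightarrow> nat \<Rightarrow> real \<Rightarrow> real" where
  "hsum c N x = (\<Sum>k\<le>N. c k * hermite k x)"

lemma hsum_borel[measurable]: "hsum c N \<in> borel_measurable borel"
  unfolding hsum_def by measurable

lemma sqi_hermite: "sqi gauss_measure (hermite k)"
  unfolding sqi_def using gauss_hermite_prod_int[of k k] by (simp add: power2_eq_square)

lemma sqi_hsum: "sqi gauss_measure (hsum c N)"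
proof -
  have "sqi gauss_measure (\<lambda>x. \<Sum>k\<le>N. c k * hermite k x)"
    by (intro sqi_sum sqi_cmult sqi_hermite) simp
  then show ?thesis by (simp add: hsum_def[abs_def])
qed

lemma hsum_He: "(\<integral>x. hsum c N x * hermite j x \<partial>gauss_measure) = (if j \<le> N then c j * fact j else 0)"
proof -
  have "(\<integral>x. hsum c N x * hermite j x \<partial>gauss_measure) =
      (\<Sum>k\<le>N. c k * (\<integral>x. hermite k x * hermite j x \<partial>gauss_measure))"
    unfolding hsum_def sum_distrib_right
    by (simp add: Bochner_Integration.integral_sum gauss_hermite_prod_int mult.assoc)
  also have "\<dots> = (\<Sum>k\<le>N. if k = j then c j * fact j else 0)"
    by (intro sum.cong refl) (simp add: gauss_hermite_orth)
  also have "\<dots> = (if j \<le> N then c j * fact j else 0)"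
    by (simp add: sum.delta')
  finally show ?thesis .
qed

lemma hsum_sq: "(\<integral>x. (hsum c N x)\<^sup>2 \<partial>gauss_measure) = (\<Sum>k\<le>N. (c k)\<^sup>2 * fact k)"
proof -
  have "(\<integral>x. (hsum c N x)\<^sup>2 \<partial>gauss_measure) = (\<integral>x. (\<Sum>k\<le>N. c k * (hsum c N x * hermite k x)) \<partial>gauss_measure)"
    by (rule Bochner_Integration.integral_cong) (simp_all add: power2_eq_square hsum_def[of c N] sum_distrib_left sum_distrib_right mult_ac)
  also have "\<dots> = (\<Sum>k\<le>N. c k * (\<integral>x. hsum c N x * hermite k x \<partial>gauss_measure))"
    by (simp add: Bochner_Integration.integral_sum sqi_prod[OF sqi_hsum sqi_hermite])
  also have "\<dots> = (\<Sum>k\<le>N. (c k)\<^sup>2 * fact k)"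
    by (intro sum.cong refl) (simp add: hsum_He power2_eq_square)
  finally show ?thesis .
qed

context
  fixes F :: "real \<Rightarrow> real"
  assumes F: "sqi gauss_measure F"
begin

lemma F_He_int: "integrable gauss_measure (\<lambda>x. F x * hermite k x)"
  by (rule sqi_prod[OF F sqi_hermite])

lemma F_He: "(\<integral>x. F x * hermite k x \<partial>gauss_measure) = hermite_coeff F k * fact k"
  by (simp add: hermite_coeff_def)

lemma F_hsum: "(\<integral>x. F x * hsum (hermite_coeff F) N x \<partial>gauss_measure) = (\<Sum>k\<le>N. (hermite_coeff F k)\<^sup>2 * fact k)"
proof -
  have "(\<integral>x. F x * hsum (hermite_coeff F) N x \<partial>gauss_measure) =
     (\<integral>x. (\<Sum>k\<le>N. hermite_coeff F k * (F x * hermite k x)) \<partial>gauss_measure)"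
    by (rule Bochner_Integration.integral_cong) (simp_all add: hsum_def sum_distrib_left mult_ac)
  also have "\<dots> = (\<Sum>k\<le>N. hermite_coeff F k * (\<integral>x. F x * hermite k x \<partial>gauss_measure))"
    by (simp add: Bochner_Integration.integral_sum F_He_int)
  also have "\<dots> = (\<Sum>k\<le>N. (hermite_coeff F k)\<^sup>2 * fact k)"
    by (intro sum.cong refl) (simp add: F_He power2_eq_square)
  finally show ?thesis .
qed

lemma resid: "(\<integral>x. (F x - hsum (hermite_coeff F) N x)\<^sup>2 \<partial>gauss_measure) =
    (\<integral>x. (F x)\<^sup>2 \<partial>gauss_measure) - (\<Sum>k\<le>N. (hermite_coeff F k)\<^sup>2 * fact k)"
proof -
  let ?h = "hsum (hermite_coeff F) N"
  have "(\<lambda>x. (F x - ?h x)\<^sup>2) = (\<lambda>x. (F x)\<^sup>2 - 2 * (F x * ?h x) + (?h x)\<^sup>2)"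
    by (simp add: fun_eq_iff power2_eq_square algebra_simps)
  moreover have "(\<integral>x. (F x)\<^sup>2 - 2 * (F x * ?h x) + (?h x)\<^sup>2 \<partial>gauss_measure) =
     (\<integral>x. (F x)\<^sup>2 \<partial>gauss_measure) - 2 * (\<integral>x. F x * ?h x \<partial>gauss_measure) + (\<integral>x. (?h x)\<^sup>2 \<partial>gauss_measure)"
    using F sqi_hsum sqi_prod[OF F sqi_hsum]
    by (simp add: sqi_def Bochner_Integration.integral_add Bochner_Integration.integral_diff
          Bochner_Integration.integrable_diff Bochner_Integration.integrable_mult_right)
  ultimately show ?thesis by (simp add: F_hsum hsum_sq)
qed

lemma bessel_partial: "(\<Sum>k\<le>N. (hermite_coeff F k)\<^sup>2 * fact k) \<le> (\<integral>x. (F x)\<^sup>2 \<partial>gauss_measure)"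
  using resid[of N] sqi_nonneg[of gauss_measure "\<lambda>x. F x - hsum (hermite_coeff F) N x"] by simp

lemma bessel_summable: "summable (\<lambda>k. (hermite_coeff F k)\<^sup>2 * fact k)"
proof (rule summableI_nonneg_bounded)
  fix n
  have "(\<Sum>k<n. (hermite_coeff F k)\<^sup>2 * fact k) \<le> (\<Sum>k\<le>n. (hermite_coeff F k)\<^sup>2 * fact k)"
    by (intro sum_mono2) auto
  also have "\<dots> \<le> (\<integral>x. (F x)\<^sup>2 \<partial>gauss_measure)" by (rule bessel_partial)
  finally show "(\<Sum>k<n. (hermite_coeff F k)\<^sup>2 * fact k) \<le> (\<integral>x. (F x)\<^sup>2 \<partial>gauss_measure)" .
qed simp

end


lemma sqi_poly: "sqi gauss_measure (poly p)"
proof -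
  have "poly (p * p) = (\<lambda>x. (poly p x)\<^sup>2)" by (simp add: fun_eq_iff poly_mult power2_eq_square)
  then show ?thesis unfolding sqi_def using gauss_poly_int[of "p * p"] by simp
qed

lemma sqi_xn_He: "sqi gauss_measure (\<lambda>x. x ^ n * hermite j x)"
proof -
  have "(\<lambda>x. x ^ n * hermite j x) = poly (monom 1 n * hp j)"
    by (simp add: fun_eq_iff poly_mult poly_monom poly_hp)
  then show ?thesis using sqi_poly by metis
qed

lemma gauss_exp_int: "integrable gauss_measure (\<lambda>x. exp (c * x))"
proof -
  have eq: "std_normal_density x * exp (c * x) = exp (c\<^sup>2 / 2) * normal_density c 1 x" for x
  proof -
    have "exp (- x\<^sup>2 / 2) * exp (c * x) = exp (c\<^sup>2 / 2) * exp (- (x - c)\<^sup>2 / 2)"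
      by (simp add: exp_add[symmetric] power2_eq_square algebra_simps add_divide_distrib diff_divide_distrib)
    then show ?thesis by (simp add: std_normal_density_def normal_density_def)
  qed
  show ?thesis
    by (subst gauss_integrable_iff) (auto simp: eq intro: Bochner_Integration.integrable_mult_right)
qed

lemma gauss_exp_abs_int: "integrable gauss_measure (\<lambda>x. exp (c * \<bar>x\<bar>))"
proof (rule Bochner_Integration.integrable_bound)
  show "integrable gauss_measure (\<lambda>x. exp (c * x) + exp (- c * x))"
    by (intro Bochner_Integration.integrable_add gauss_exp_int)
  show "AE x in gauss_measure. norm (exp (c * \<bar>x\<bar>)) \<le> norm (exp (c * x) + exp (- c * x))"
  proof (intro AE_I2)
    fix x
    have p: "0 < exp (c * x)" "0 < exp (- c * x)" by simp_all
    have "exp (c * \<bar>x\<bar>) = exp (c * x) \<or> exp (c * \<bar>x\<bar>) = exp (- c * x)"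
      by (cases "x \<ge> 0") auto
    then show "norm (exp (c * \<bar>x\<bar>)) \<le> norm (exp (c * x) + exp (- c * x))"
      using p by auto
  qed
qed simp

lemma sum_exp_le: assumes "0 \<le> (y::real)" shows "(\<Sum>n<N. y ^ n / fact n) \<le> exp y"
proof -
  have s0: "(\<lambda>n. y ^ n /\<^sub>R fact n) sums exp y" by (rule exp_converges)
  have s: "(\<lambda>n. y ^ n / fact n) sums exp y" using s0 unfolding real_scaleR_def by (simp add: divide_inverse mult.commute)
  have "(\<Sum>n<N. y ^ n / fact n) \<le> suminf (\<lambda>n. y ^ n / fact n)"
    using sum_le_suminf[of "\<lambda>n. y ^ n / fact n" "{..<N}"] s assms by (auto simp: sums_iff)
  then show ?thesis using s by (simp add: sums_iff)
qed

context
  fixes G :: "real \<Rightarrow> real"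
  assumes G: "sqi gauss_measure G"
    and orth: "\<And>k. (\<integral>x. G x * hermite k x \<partial>gauss_measure) = 0"
begin

lemma G_int: "integrable gauss_measure G"
proof -
  have "integrable gauss_measure (\<lambda>x. G x * hermite 0 x)" by (rule sqi_prod[OF G sqi_hermite])
  then show ?thesis by simp
qed

lemma G_mom_aux: "(\<integral>x. G x * (x ^ n * hermite j x) \<partial>gauss_measure) = 0"
proof (induction n arbitrary: j)
  case 0 then show ?case using orth[of j] by simp
next
  case (Suc n)
  have "(\<lambda>x. G x * (x ^ Suc n * hermite j x)) =
    (\<lambda>x. G x * (x ^ n * hermite (Suc j) x) + real j * (G x * (x ^ n * hermite (j - 1) x)))"
  proof
    fix x
    have "x ^ Suc n * hermite j x = x ^ n * (x * hermite j x)" by simp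
    also have "\<dots> = x ^ n * hermite (Suc j) x + real j * (x ^ n * hermite (j - 1) x)"
      by (simp add: hermite_xrec algebra_simps)
    finally show "G x * (x ^ Suc n * hermite j x) =
      G x * (x ^ n * hermite (Suc j) x) + real j * (G x * (x ^ n * hermite (j - 1) x))"
      by (simp add: algebra_simps)
  qed
  then show ?case
    using Suc sqi_prod[OF G sqi_xn_He]
    by (simp add: Bochner_Integration.integral_add Bochner_Integration.integrable_mult_right)
qed

lemma G_mom: "(\<integral>x. G x * x ^ n \<partial>gauss_measure) = 0"
  using G_mom_aux[of n 0] by simp

lemma G_mom_int: "integrable gauss_measure (\<lambda>x. G x * x ^ n)"
  using sqi_prod[OF G sqi_xn_He[of n 0]] by simp

lemma G_cf: "(\<integral>x. G x *\<^sub>R iexp (u * x) \<partial>gauss_measure) = 0"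
proof -
  define s where "s N x = (\<Sum>n<N. complex_of_real (G x * x ^ n) * ((\<i> * complex_of_real u) ^ n / of_real (fact n)))" for N x
  define w where "w x = (G x)\<^sup>2 + exp (2 * \<bar>u\<bar> * \<bar>x\<bar>)" for x
  have Gm[measurable]: "G \<in> borel_measurable borel" using G by (simp add: sqi_def)
  have s_int: "integral\<^sup>L gauss_measure (s N) = 0" for N
    unfolding s_def
    apply (subst Bochner_Integration.integral_sum)
     apply (rule Bochner_Integration.integrable_mult_left)
     apply (rule integrable_of_real)
     apply (rule G_mom_int)
    apply (rule sum.neutral)
    apply (intro ballI)
    apply (subst Bochner_Integration.integral_mult_left_zero)
    apply (subst integral_complex_of_real)
    apply (simp only: G_mom)
    apply simp
    done
  have lim: "(\<lambda>N. integral\<^sup>L gauss_measure (s N)) \<longlonglongrightarrow> (\<integral>x. G x *\<^sub>R iexp (u * x) \<partial>gauss_measure)"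
  proof (rule integral_dominated_convergence[where w = w])
    show "integrable gauss_measure w"
      unfolding w_def using G
      by (intro Bochner_Integration.integrable_add gauss_exp_abs_int) (simp add: sqi_def)
    show "AE x in gauss_measure. (\<lambda>N. s N x) \<longlonglongrightarrow> G x *\<^sub>R iexp (u * x)"
    proof (intro AE_I2)
      fix x
      have "(\<lambda>n. (\<i> * complex_of_real (u * x)) ^ n /\<^sub>R fact n) sums iexp (u * x)"
        by (rule exp_converges)
      then have "(\<lambda>n. complex_of_real (G x) * ((\<i> * complex_of_real (u * x)) ^ n /\<^sub>R fact n)) sums
          (complex_of_real (G x) * iexp (u * x))"
        by (rule sums_mult)
      moreover have "(\<lambda>n. complex_of_real (G x) * ((\<i> * complex_of_real (u * x)) ^ n /\<^sub>R fact n)) =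
          (\<lambda>n. complex_of_real (G x * x ^ n) * ((\<i> * complex_of_real u) ^ n / of_real (fact n)))"
        by (simp add: fun_eq_iff scaleR_conv_of_real power_mult_distrib field_simps)
      ultimately have S: "(\<lambda>n. complex_of_real (G x * x ^ n) * ((\<i> * complex_of_real u) ^ n / of_real (fact n)))
          sums (complex_of_real (G x) * iexp (u * x))" by metis
      then show "(\<lambda>N. s N x) \<longlonglongrightarrow> G x *\<^sub>R iexp (u * x)"
        unfolding s_def sums_def scaleR_conv_of_real .
    qed
    show "AE x in gauss_measure. norm (s N x) \<le> w x" for N
    proof (intro AE_I2)
      fix x
      have "norm (s N x) \<le> (\<Sum>n<N. norm (complex_of_real (G x * x ^ n) * ((\<i> * complex_of_real u) ^ n / of_real (fact n))))"
        unfolding s_def by (rule norm_sum)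
      also have "\<dots> = \<bar>G x\<bar> * (\<Sum>n<N. \<bar>u * x\<bar> ^ n / fact n)"
        by (simp add: sum_distrib_left norm_mult norm_power norm_divide abs_mult power_mult_distrib mult_ac)
      also have "\<dots> \<le> \<bar>G x\<bar> * exp (\<bar>u * x\<bar>)"
        by (intro mult_left_mono sum_exp_le) auto
      also have "\<dots> \<le> (G x)\<^sup>2 + (exp (\<bar>u\<bar> * \<bar>x\<bar>))\<^sup>2"
        using abs_prod_le_sq[of "G x" "exp (\<bar>u\<bar> * \<bar>x\<bar>)"] by (simp add: abs_mult)
      also have "(exp (\<bar>u\<bar> * \<bar>x\<bar>))\<^sup>2 = exp (2 * \<bar>u\<bar> * \<bar>x\<bar>)"
        by (simp add: power2_eq_square exp_add[symmetric])
      finally show "norm (s N x) \<le> w x" by (simp add: w_def)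
    qed
    show "(\<lambda>x. G x *\<^sub>R iexp (u * x)) \<in> borel_measurable gauss_measure" by (simp only: measurable_gauss1) measurable
    show "s N \<in> borel_measurable gauss_measure" for N unfolding s_def by (simp only: measurable_gauss1) measurable
  qed
  then show ?thesis using s_int by (simp add: LIMSEQ_const_iff)
qed

lemma G_zero: "AE x in gauss_measure. G x = 0"
proof -
  interpret gp: prob_space gauss_measure by (rule gauss_prob)
  have Gm[measurable]: "G \<in> borel_measurable borel" using G by (simp add: sqi_def)
  define gp where "gp x = max (G x) 0" for x
  define gn where "gn x = max (- G x) 0" for x
  have gpm[measurable]: "gp \<in> borel_measurable borel" unfolding gp_def by measurable
  have gnm[measurable]: "gn \<in> borel_measurable borel" unfolding gn_def by measurable
  have Gpn: "G x = gp x - gn x" for x by (simp add: gp_def gn_def max_def)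
  have gp0: "0 \<le> gp x" "0 \<le> gn x" for x by (simp_all add: gp_def gn_def)
  have gpint: "integrable gauss_measure gp"
    by (rule Bochner_Integration.integrable_bound[OF G_int]) (auto simp: gp_def)
  have gnint: "integrable gauss_measure gn"
    by (rule Bochner_Integration.integrable_bound[OF G_int]) (auto simp: gn_def)
  have "(\<integral>x. G x \<partial>gauss_measure) = 0" using orth[of 0] by simp
  then have eqm: "(\<integral>x. gp x \<partial>gauss_measure) = (\<integral>x. gn x \<partial>gauss_measure)"
    using gpint gnint by (simp add: Gpn Bochner_Integration.integral_diff)
  define m where "m = (\<integral>x. gp x \<partial>gauss_measure)"
  have m0: "m \<ge> 0" unfolding m_def by (rule Bochner_Integration.integral_nonneg) (simp add: gp0)
  show ?thesis
  proof (cases "m = 0")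
    case True
    have "AE x in gauss_measure. gp x = 0"
      using True integral_nonneg_eq_0_iff_AE[OF gpint] gp0 unfolding m_def by simp
    moreover have "AE x in gauss_measure. gn x = 0"
      using True eqm integral_nonneg_eq_0_iff_AE[OF gnint] gp0 unfolding m_def by simp
    ultimately show ?thesis by eventually_elim (simp add: Gpn)
  next
    case False
    then have mp: "m > 0" using m0 by simp
    define Mp where "Mp = density gauss_measure (\<lambda>x. ennreal (gp x / m))"
    define Mn where "Mn = density gauss_measure (\<lambda>x. ennreal (gn x / m))"
    have rd: "real_distribution (density gauss_measure (\<lambda>x. ennreal (g x / m)))"
      if gm[measurable]: "g \<in> borel_measurable borel" and g0: "\<And>x. 0 \<le> g x"
        and gi: "integrable gauss_measure g" and gint: "(\<integral>x. g x \<partial>gauss_measure) = m" for g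
    proof -
      have "emeasure (density gauss_measure (\<lambda>x. ennreal (g x / m))) UNIV =
          (\<integral>\<^sup>+ x. ennreal (g x / m) \<partial>gauss_measure)"
        by (subst emeasure_density) auto
      also have "\<dots> = ennreal (\<integral>x. g x / m \<partial>gauss_measure)"
        by (rule nn_integral_eq_integral) (use gi g0 mp in auto)
      also have "(\<integral>x. g x / m \<partial>gauss_measure) = 1" using gint mp by simp
      finally have "prob_space (density gauss_measure (\<lambda>x. ennreal (g x / m)))"
        by (intro prob_spaceI) simp
      then show ?thesis unfolding real_distribution_def real_distribution_axioms_def by simp
    qed
    have rdp: "real_distribution Mp" unfolding Mp_def by (rule rd) (use gpint gp0 in \<open>auto simp: m_def\<close>)
    have rdn: "real_distribution Mn" unfolding Mn_def by (rule rd) (use gnint gp0 eqm in \<open>auto simp: m_def\<close>)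
    have chr: "char (density gauss_measure (\<lambda>x. ennreal (g x / m))) u = (\<integral>x. (g x / m) *\<^sub>R iexp (u * x) \<partial>gauss_measure)"
      if gm[measurable]: "g \<in> borel_measurable borel" and g0: "\<And>x. 0 \<le> g x" for g u
      unfolding char_def
      by (subst integral_density) (use g0 mp in \<open>auto simp: measurable_gauss1\<close>)
    have sint: "integrable gauss_measure (\<lambda>x. (g x / m) *\<^sub>R iexp (u * x))"
      if gm[measurable]: "g \<in> borel_measurable borel" and gi: "integrable gauss_measure g" for g u
    proof (rule Bochner_Integration.integrable_bound[where f = "\<lambda>x. g x / m"])
      show "integrable gauss_measure (\<lambda>x. g x / m)" using gi by simp
      show "AE x in gauss_measure. norm ((g x / m) *\<^sub>R iexp (u * x)) \<le> norm (g x / m)"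
        by (intro AE_I2) (simp add: norm_mult)
    qed (simp only: measurable_gauss1, measurable)
    have "char Mp = char Mn"
    proof
      fix u
      have "char Mp u - char Mn u =
        (\<integral>x. (gp x / m) *\<^sub>R iexp (u * x) - (gn x / m) *\<^sub>R iexp (u * x) \<partial>gauss_measure)"
        unfolding Mp_def Mn_def chr[OF gpm gp0(1)] chr[OF gnm gp0(2)]
        by (rule Bochner_Integration.integral_diff[symmetric]) (rule sint; fact)+
      also have "\<dots> = (\<integral>x. (1 / m) *\<^sub>R (G x *\<^sub>R iexp (u * x)) \<partial>gauss_measure)"
        by (rule Bochner_Integration.integral_cong) (simp_all add: Gpn scaleR_diff_left[symmetric] diff_divide_distrib[symmetric])
      also have "\<dots> = 0" unfolding Bochner_Integration.integral_scaleR_right G_cf by simp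
      finally show "char Mp u = char Mn u" by simp
    qed
    then have "Mp = Mn" by (rule Levy_uniqueness[OF rdp rdn])
    then have "AE x in gauss_measure. ennreal (gp x / m) = ennreal (gn x / m)"
      unfolding Mp_def Mn_def
      by (subst gp.density_unique_iff[symmetric]) (simp_all only: measurable_gauss1, measurable)
    then show ?thesis
    proof eventually_elim
      case (elim x)
      then have "gp x / m = gn x / m" using gp0[of x] mp by (simp add: ennreal_inj)
      then have "gp x = gn x" using mp by simp
      then show "G x = 0" by (simp add: gp_def gn_def max_def split: if_splits)
    qed
  qed
qed

end


lemma hermite_complete:
  assumes "sqi gauss_measure G" "\<And>k. (\<integral>x. G x * hermite k x \<partial>gauss_measure) = 0"
  shows "AE x in gauss_measure. G x = 0"
  using G_zero[OF assms] .

lemma sum_atMost_diff: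
  fixes f :: "nat \<Rightarrow> 'b::ab_group_add"
  assumes "N \<le> M"
  shows "(\<Sum>k\<le>M. f k) - (\<Sum>k\<le>N. f k) = (\<Sum>k\<le>M. if k \<le> N then 0 else f k)"
proof -
  have "(\<Sum>k\<le>M. if k \<le> N then 0 else f k) = (\<Sum>k\<in>{..M} \<inter> - {k. k \<le> N}. f k)"
    by (simp add: sum.If_cases)
  also have "\<dots> = (\<Sum>k\<le>M. f k) - (\<Sum>k\<le>N. f k)"
  proof -
    have "{..M} = {..N} \<union> ({..M} \<inter> - {k. k \<le> N})" using assms by auto
    then have "(\<Sum>k\<le>M. f k) = (\<Sum>k\<le>N. f k) + (\<Sum>k\<in>{..M} \<inter> - {k. k \<le> N}. f k)"
      by (metis (no_types, lifting) Int_iff finite_Int finite_atMost sum.union_disjoint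
          ComplD atMost_iff disjoint_iff mem_Collect_eq)
    then show ?thesis by simp
  qed
  finally show ?thesis by simp
qed

lemma hsum_diff_sq:
  assumes "N \<le> M"
  shows "(\<integral>x. (hsum c M x - hsum c N x)\<^sup>2 \<partial>gauss_measure) =
      (\<Sum>k\<le>M. (c k)\<^sup>2 * fact k) - (\<Sum>k\<le>N. (c k)\<^sup>2 * fact k)"
proof -
  define c' where "c' k = (if k \<le> N then 0 else c k)" for k
  have "hsum c M x - hsum c N x = hsum c' M x" for x
    unfolding hsum_def c'_def sum_atMost_diff[OF assms] by (intro sum.cong) auto
  then have "(\<integral>x. (hsum c M x - hsum c N x)\<^sup>2 \<partial>gauss_measure) = (\<Sum>k\<le>M. (c' k)\<^sup>2 * fact k)"
    by (simp add: hsum_sq)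
  also have "\<dots> = (\<Sum>k\<le>M. (c k)\<^sup>2 * fact k) - (\<Sum>k\<le>N. (c k)\<^sup>2 * fact k)"
    unfolding sum_atMost_diff[OF assms] c'_def by (intro sum.cong) auto
  finally show ?thesis .
qed

lemma abs_le_geom_sq: "\<bar>e::real\<bar> \<le> (1/2)^j + 2^j * e\<^sup>2"
proof (cases "\<bar>e\<bar> \<le> (1/2)^j")
  case True then show ?thesis by (simp add: add_increasing2)
next
  case False
  then have "(1/2)^j < \<bar>e\<bar>" by simp
  then have "1 < 2^j * \<bar>e\<bar>" by (simp add: power_one_over field_simps)
  then have "\<bar>e\<bar> \<le> 2^j * \<bar>e\<bar> * \<bar>e\<bar>" by (simp add: mult_le_cancel_right1)
  also have "\<dots> = 2^j * e\<^sup>2" by (simp add: power2_eq_square abs_mult_self_eq mult.assoc)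
  finally show ?thesis by (simp add: add_increasing)
qed

context
  fixes F :: "real \<Rightarrow> real"
  assumes F: "sqi gauss_measure F"
begin

definition "cF = hermite_coeff F"
definition "PF N = (\<Sum>k\<le>N. (cF k)\<^sup>2 * fact k)"
definition "SF = (\<Sum>k. (cF k)\<^sup>2 * fact k)"

lemma PF_lim: "PF \<longlonglongrightarrow> SF"
  unfolding PF_def SF_def cF_def using summable_LIMSEQ'[OF bessel_summable[OF F]] by simp

lemma PF_mono: "N \<le> M \<Longrightarrow> PF N \<le> PF M"
  unfolding PF_def by (intro sum_mono2) auto

lemma PF_le_SF: "PF N \<le> SF"
  unfolding PF_def SF_def cF_def
  by (rule sum_le_suminf[OF bessel_summable[OF F]]) auto

lemma parseval: "(\<integral>x. (F x)\<^sup>2 \<partial>gauss_measure) = SF"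
proof -
  have Fm[measurable]: "F \<in> borel_measurable borel" using F by (simp add: sqi_def)
  have "\<forall>j. \<exists>N0. \<forall>N\<ge>N0. SF - PF N \<le> (1/4)^j"
  proof
    fix j
    have "(0::real) < (1/4)^j" by simp
    then obtain N0 where "\<forall>N\<ge>N0. norm (PF N - SF) < (1/4)^j"
      using PF_lim unfolding LIMSEQ_iff by blast
    then show "\<exists>N0. \<forall>N\<ge>N0. SF - PF N \<le> (1/4)^j"
      by (intro exI[of _ N0]) (auto simp: abs_less_iff less_imp_le)
  qed
  from choice[OF this] obtain N0 where N0: "\<forall>j. \<forall>N\<ge>N0 j. SF - PF N \<le> (1/4)^j" by blast
  define n where "n j = (\<Sum>i\<le>j. N0 i) + j" for j
  have n_mono: "n j \<le> n l" if "j \<le> l" for j l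
  proof -
    have "(\<Sum>i\<le>j. N0 i) \<le> (\<Sum>i\<le>l. N0 i)" using that by (intro sum_mono2) auto
    then show ?thesis using that by (simp add: n_def)
  qed
  have n_ge: "N0 j \<le> n j" for j
  proof -
    have "N0 j \<le> (\<Sum>i\<le>j. N0 i)" by (rule member_le_sum) auto
    then show ?thesis by (simp add: n_def)
  qed
  have n_ge2: "j \<le> n j" for j by (simp add: n_def)
  have SFn: "SF - PF (n j) \<le> (1/4)^j" for j using N0 n_ge by blast
  have SFn0: "0 \<le> SF - PF N" for N using PF_le_SF[of N] by simp
  have SFlim: "(\<lambda>j. SF - PF (n j)) \<longlonglongrightarrow> 0"
  proof -
    have "strict_mono n"
    proof (rule strict_mono_Suc_iff[THEN iffD2], intro allI)
      fix j show "n j < n (Suc j)" using n_mono[of j "Suc j"] by (simp add: n_def)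
    qed
    then have "(\<lambda>j. PF (n j)) \<longlonglongrightarrow> SF" using LIMSEQ_subseq_LIMSEQ[OF PF_lim] by (simp add: comp_def)
    then show ?thesis by (auto intro: tendsto_eq_intros)
  qed
  define h where "h j x = hsum cF (n j) x" for j x
  have sqih: "sqi gauss_measure (h j)" for j unfolding h_def by (simp add: sqi_hsum[unfolded])
  have hm[measurable]: "h j \<in> borel_measurable borel" for j unfolding h_def by measurable
  define e where "e j x = h (Suc j) x - h j x" for j x
  have em[measurable]: "e j \<in> borel_measurable borel" for j unfolding e_def by measurable
  have e_sq: "(\<integral>x. (e j x)\<^sup>2 \<partial>gauss_measure) = PF (n (Suc j)) - PF (n j)" for j
    unfolding e_def h_def PF_def by (rule hsum_diff_sq) (rule n_mono, simp)
  have e_le: "(\<integral>x. (e j x)\<^sup>2 \<partial>gauss_measure) \<le> (1/4)^j" for j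
    using e_sq[of j] SFn[of j] PF_le_SF[of "n (Suc j)"] by simp
  have e_int: "integrable gauss_measure (\<lambda>x. (e j x)\<^sup>2)" for j
    unfolding e_def using sqi_diff[OF sqih sqih] by (simp add: sqi_def)
  define q where "q x = (\<Sum>j. ennreal (2^j * (e j x)\<^sup>2))" for x
  have qm[measurable]: "q \<in> borel_measurable borel" unfolding q_def by measurable
  have "(\<integral>\<^sup>+x. q x \<partial>gauss_measure) = (\<Sum>j. \<integral>\<^sup>+x. ennreal (2^j * (e j x)\<^sup>2) \<partial>gauss_measure)"
    unfolding q_def by (rule nn_integral_suminf) (simp only: measurable_gauss1, measurable)
  also have "\<dots> \<le> (\<Sum>j. ennreal ((1/2)^j))"
  proof (rule suminf_le[OF _ summableI summableI])
    fix j
    have "(\<integral>\<^sup>+x. ennreal (2^j * (e j x)\<^sup>2) \<partial>gauss_measure) = ennreal (\<integral>x. 2^j * (e j x)\<^sup>2 \<partial>gauss_measure)"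
      by (rule nn_integral_eq_integral) (use e_int in auto)
    also have "(\<integral>x. 2^j * (e j x)\<^sup>2 \<partial>gauss_measure) \<le> 2^j * (1/4)^j"
      using e_le[of j] by simp
    also have "(2::real)^j * (1/4)^j = (1/2)^j" by (simp add: power_mult_distrib[symmetric])
    finally show "(\<integral>\<^sup>+x. ennreal (2^j * (e j x)\<^sup>2) \<partial>gauss_measure) \<le> ennreal ((1/2)^j)"
      by (simp add: ennreal_leI)
  qed
  also have "\<dots> = ennreal (\<Sum>j. (1/2)^j)"
    by (rule suminf_ennreal2) (auto simp: summable_geometric)
  finally have "(\<integral>\<^sup>+x. q x \<partial>gauss_measure) \<noteq> \<infinity>"
    by (auto simp: top_unique)
  then have AEq: "AE x in gauss_measure. q x \<noteq> \<infinity>"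
    by (intro nn_integral_PInf_AE) (simp only: measurable_gauss1, measurable)
  define B where "B = {x. q x \<noteq> \<infinity>}"
  have Bm[measurable]: "B \<in> sets borel" unfolding B_def by measurable
  have AEB: "AE x in gauss_measure. x \<in> B" using AEq by (simp add: B_def)
  have conv: "convergent (\<lambda>j. h j x)" if "x \<in> B" for x
  proof -
    have qx: "(\<Sum>j. ennreal (2^j * (e j x)\<^sup>2)) \<noteq> top" using that by (simp add: B_def q_def)
    have "summable (\<lambda>j. 2^j * (e j x)\<^sup>2)"
      by (rule summable_suminf_not_top[OF _ qx]) simp
    then have "summable (\<lambda>j. (1/2)^j + 2^j * (e j x)\<^sup>2)"
      by (intro summable_add summable_geometric) auto
    then have "summable (\<lambda>j. \<bar>e j x\<bar>)"
      by (rule summable_comparison_test[rotated]) (auto intro: abs_le_geom_sq)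
    then have "summable (\<lambda>j. e j x)" by (rule summable_rabs_cancel)
    then have "(\<lambda>J. \<Sum>j<J. e j x) \<longlonglongrightarrow> suminf (\<lambda>j. e j x)" by (rule summable_LIMSEQ)
    moreover have "(\<Sum>j<J. e j x) = h J x - h 0 x" for J
      unfolding e_def by (rule sum_lessThan_telescope)
    ultimately have "(\<lambda>J. h J x - h 0 x) \<longlonglongrightarrow> suminf (\<lambda>j. e j x)" by simp
    then have "(\<lambda>J. (h J x - h 0 x) + h 0 x) \<longlonglongrightarrow> suminf (\<lambda>j. e j x) + h 0 x"
      by (intro tendsto_add tendsto_const)
    then show ?thesis unfolding convergent_def by auto
  qed
  define G where "G x = (if x \<in> B then lim (\<lambda>j. h j x) else 0)" for x
  have G_lim: "(\<lambda>j. h j x) \<longlonglongrightarrow> G x" if "x \<in> B" for x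
  proof -
    have "(\<lambda>j. h j x) \<longlonglongrightarrow> lim (\<lambda>j. h j x)" using conv[OF that] by (rule convergent_LIMSEQ_iff[THEN iffD1])
    then show ?thesis using that by (simp add: G_def)
  qed
  have Gm[measurable]: "G \<in> borel_measurable borel"
  proof (rule borel_measurable_LIMSEQ_real[where u = "\<lambda>j x. if x \<in> B then h j x else 0"])
    show "(\<lambda>j. if x \<in> B then h j x else 0) \<longlonglongrightarrow> G x" for x
    proof (cases "x \<in> B")
      case True then show ?thesis using G_lim[OF True] by simp
    next
      case False then show ?thesis by (simp add: G_def)
    qed
  qed measurable
  have Gj: "(\<integral>\<^sup>+x. ennreal ((G x - h j x)\<^sup>2) \<partial>gauss_measure) \<le> ennreal (SF - PF (n j))" for j
  proof -
    have "(\<integral>\<^sup>+x. ennreal ((G x - h j x)\<^sup>2) \<partial>gauss_measure) =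
        (\<integral>\<^sup>+x. liminf (\<lambda>l. ennreal ((h l x - h j x)\<^sup>2)) \<partial>gauss_measure)"
    proof (rule nn_integral_cong_AE)
      show "AE x in gauss_measure. ennreal ((G x - h j x)\<^sup>2) = liminf (\<lambda>l. ennreal ((h l x - h j x)\<^sup>2))"
        using AEB
      proof eventually_elim
        case (elim x)
        have "(\<lambda>l. ennreal ((h l x - h j x)\<^sup>2)) \<longlonglongrightarrow> ennreal ((G x - h j x)\<^sup>2)"
          by (intro tendsto_ennrealI tendsto_intros G_lim elim)
        then show ?case by (intro lim_imp_Liminf[symmetric]) simp_all
      qed
    qed
    also have "\<dots> \<le> liminf (\<lambda>l. \<integral>\<^sup>+x. ennreal ((h l x - h j x)\<^sup>2) \<partial>gauss_measure)"
      by (rule nn_integral_liminf) (simp only: measurable_gauss1, measurable)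
    also have "\<dots> \<le> limsup (\<lambda>l. \<integral>\<^sup>+x. ennreal ((h l x - h j x)\<^sup>2) \<partial>gauss_measure)"
      by (rule Liminf_le_Limsup) simp
    also have "\<dots> \<le> ennreal (SF - PF (n j))"
    proof (rule Limsup_bounded)
      show "\<forall>\<^sub>F l in sequentially. (\<integral>\<^sup>+x. ennreal ((h l x - h j x)\<^sup>2) \<partial>gauss_measure) \<le> ennreal (SF - PF (n j))"
        unfolding eventually_sequentially
      proof (intro exI allI impI)
        fix l assume jl: "j \<le> l"
        have "(\<integral>\<^sup>+x. ennreal ((h l x - h j x)\<^sup>2) \<partial>gauss_measure) = ennreal (\<integral>x. (h l x - h j x)\<^sup>2 \<partial>gauss_measure)"
          by (rule nn_integral_eq_integral) (use sqi_diff[OF sqih sqih] in \<open>auto simp: sqi_def\<close>)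
        also have "(\<integral>x. (h l x - h j x)\<^sup>2 \<partial>gauss_measure) = PF (n l) - PF (n j)"
          unfolding h_def PF_def by (rule hsum_diff_sq) (rule n_mono[OF jl])
        also have "\<dots> \<le> SF - PF (n j)" using PF_le_SF[of "n l"] by simp
        finally show "(\<integral>\<^sup>+x. ennreal ((h l x - h j x)\<^sup>2) \<partial>gauss_measure) \<le> ennreal (SF - PF (n j))"
          by (simp add: ennreal_leI)
      qed
    qed
    finally show ?thesis .
  qed
  have Gj_int: "integrable gauss_measure (\<lambda>x. (G x - h j x)\<^sup>2)" for j
  proof (rule integrableI_nonneg)
    show "(\<integral>\<^sup>+x. ennreal ((G x - h j x)\<^sup>2) \<partial>gauss_measure) < \<infinity>"
      using Gj[of j] by (simp add: order_le_less_trans)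
    show "(\<lambda>x. (G x - h j x)\<^sup>2) \<in> borel_measurable gauss_measure" by (simp only: measurable_gauss1) measurable
    show "AE x in gauss_measure. 0 \<le> (G x - h j x)\<^sup>2" by simp
  qed
  have Gj_le: "(\<integral>x. (G x - h j x)\<^sup>2 \<partial>gauss_measure) \<le> SF - PF (n j)" for j
  proof -
    have "ennreal (\<integral>x. (G x - h j x)\<^sup>2 \<partial>gauss_measure) = (\<integral>\<^sup>+x. ennreal ((G x - h j x)\<^sup>2) \<partial>gauss_measure)"
      by (rule nn_integral_eq_integral[symmetric]) (use Gj_int in auto)
    then have "ennreal (\<integral>x. (G x - h j x)\<^sup>2 \<partial>gauss_measure) \<le> ennreal (SF - PF (n j))"
      using Gj[of j] by simp
    then show ?thesis by (subst (asm) ennreal_le_iff) (use SFn0[of "n j"] in auto)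
  qed
  have sqiGh: "sqi gauss_measure (\<lambda>x. G x - h j x)" for j
    using Gj_int[of j] by (simp add: sqi_def)
  have sqiG: "sqi gauss_measure G"
    using sqi_add[OF sqiGh[of 0] sqih[of 0]] by simp
  have orthFG: "(\<integral>x. (F x - G x) * hermite k x \<partial>gauss_measure) = 0" for k
  proof -
    define a where "a = (\<integral>x. (F x - G x) * hermite k x \<partial>gauss_measure)"
    have bound: "a\<^sup>2 \<le> (SF - PF (n j)) * fact k" if kj: "k \<le> j" for j
    proof -
      have kn: "k \<le> n j" using kj n_ge2[of j] by simp
      have i1: "integrable gauss_measure (\<lambda>x. (F x - h j x) * hermite k x)"
        by (rule sqi_prod[OF sqi_diff[OF F sqih] sqi_hermite])
      have i2: "integrable gauss_measure (\<lambda>x. (h j x - G x) * hermite k x)"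
        by (rule sqi_prod[OF sqi_diff[OF sqih sqiG] sqi_hermite])
      have "(\<integral>x. (F x - h j x) * hermite k x \<partial>gauss_measure) =
          (\<integral>x. F x * hermite k x \<partial>gauss_measure) - (\<integral>x. h j x * hermite k x \<partial>gauss_measure)"
        using F_He_int[OF F] sqi_prod[OF sqih sqi_hermite]
        by (simp add: left_diff_distrib Bochner_Integration.integral_diff)
      also have "\<dots> = 0" using kn by (simp add: F_He[OF F] h_def hsum_He cF_def)
      finally have z: "(\<integral>x. (F x - h j x) * hermite k x \<partial>gauss_measure) = 0" .
      have "a = (\<integral>x. (F x - h j x) * hermite k x + (h j x - G x) * hermite k x \<partial>gauss_measure)"
        unfolding a_def by (rule Bochner_Integration.integral_cong) (simp_all add: algebra_simps)
      also have "\<dots> = (\<integral>x. (h j x - G x) * hermite k x \<partial>gauss_measure)"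
        using i1 i2 z by (simp add: Bochner_Integration.integral_add)
      finally have aeq: "a = (\<integral>x. (h j x - G x) * hermite k x \<partial>gauss_measure)" .
      have "a\<^sup>2 \<le> (\<integral>x. (h j x - G x)\<^sup>2 \<partial>gauss_measure) * (\<integral>x. (hermite k x)\<^sup>2 \<partial>gauss_measure)"
        unfolding aeq by (rule cauchy_schwarz_sqi[OF sqi_diff[OF sqih sqiG] sqi_hermite])
      also have "(\<integral>x. (hermite k x)\<^sup>2 \<partial>gauss_measure) = fact k"
        using gauss_hermite_orth[of k k] by (simp add: power2_eq_square)
      also have "(\<integral>x. (h j x - G x)\<^sup>2 \<partial>gauss_measure) = (\<integral>x. (G x - h j x)\<^sup>2 \<partial>gauss_measure)"
        by (simp add: power2_commute)
      also have "\<dots> * fact k \<le> (SF - PF (n j)) * fact k"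
        by (intro mult_right_mono Gj_le) simp
      finally show ?thesis .
    qed
    have "(\<lambda>j. (SF - PF (n j)) * fact k) \<longlonglongrightarrow> 0 * fact k"
      by (intro tendsto_mult SFlim tendsto_const)
    then have lim0: "(\<lambda>j. (SF - PF (n j)) * fact k) \<longlonglongrightarrow> 0" by simp
    have ev: "eventually (\<lambda>j. a\<^sup>2 \<le> (SF - PF (n j)) * fact k) sequentially"
      unfolding eventually_sequentially using bound by blast
    have "a\<^sup>2 \<le> 0" by (rule tendsto_lowerbound[OF lim0 ev]) simp
    then show ?thesis unfolding a_def by simp
  qed
  have AEFG: "AE x in gauss_measure. F x - G x = 0"
    by (rule hermite_complete[OF sqi_diff[OF F sqiG] orthFG])
  have le: "(\<integral>x. (F x)\<^sup>2 \<partial>gauss_measure) - PF (n j) \<le> SF - PF (n j)" for j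
  proof -
    have "(\<integral>x. (F x)\<^sup>2 \<partial>gauss_measure) - PF (n j) = (\<integral>x. (F x - h j x)\<^sup>2 \<partial>gauss_measure)"
      using resid[OF F, of "n j"] by (simp add: h_def PF_def cF_def)
    also have "\<dots> = (\<integral>x. (G x - h j x)\<^sup>2 \<partial>gauss_measure)"
      by (rule integral_cong_AE) (use AEFG in \<open>auto elim: eventually_mono\<close>)
    finally show ?thesis using Gj_le[of j] by simp
  qed
  have "(\<integral>x. (F x)\<^sup>2 \<partial>gauss_measure) \<le> SF" using le[of 0] by simp
  moreover have "SF \<le> (\<integral>x. (F x)\<^sup>2 \<partial>gauss_measure)"
    by (rule LIMSEQ_le_const2[OF PF_lim]) (auto simp: PF_def cF_def intro: bessel_partial[OF F])
  ultimately show ?thesis by simp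
qed

lemma parseval': "(\<integral>x. (F x)\<^sup>2 \<partial>gauss_measure) = (\<Sum>k. (hermite_coeff F k)\<^sup>2 * fact k)"
  using parseval unfolding SF_def cF_def .

end


lemma parseval_ext:
  assumes F: "sqi gauss_measure F"
  shows "(\<lambda>N. \<integral>x. (F x - hsum (hermite_coeff F) N x)\<^sup>2 \<partial>gauss_measure) \<longlonglongrightarrow> 0"
proof -
  have "(\<lambda>N. (\<Sum>k\<le>N. (hermite_coeff F k)\<^sup>2 * fact k)) \<longlonglongrightarrow> (\<Sum>k. (hermite_coeff F k)\<^sup>2 * fact k)"
    by (rule summable_LIMSEQ'[OF bessel_summable[OF F]])
  then have "(\<lambda>N. (\<integral>x. (F x)\<^sup>2 \<partial>gauss_measure) - (\<Sum>k\<le>N. (hermite_coeff F k)\<^sup>2 * fact k)) \<longlonglongrightarrow>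
      (\<integral>x. (F x)\<^sup>2 \<partial>gauss_measure) - (\<Sum>k. (hermite_coeff F k)\<^sup>2 * fact k)"
    by (intro tendsto_diff tendsto_const)
  moreover have "(\<integral>x. (F x)\<^sup>2 \<partial>gauss_measure) - (\<Sum>k. (hermite_coeff F k)\<^sup>2 * fact k) = 0"
    using parseval'[OF F] by simp
  ultimately show ?thesis by (simp add: resid[OF F])
qed

lemma sq_bound_to_zero:
  fixes f g :: "nat \<Rightarrow> real"
  assumes b: "\<And>N. (f N)\<^sup>2 \<le> g N" and g: "g \<longlonglongrightarrow> 0"
  shows "f \<longlonglongrightarrow> 0"
proof -
  have "(\<lambda>N. (f N)\<^sup>2) \<longlonglongrightarrow> 0"
    by (rule tendsto_sandwich[of "\<lambda>_. 0" _ _ g]) (use b g in auto)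
  then have "(\<lambda>N. sqrt ((f N)\<^sup>2)) \<longlonglongrightarrow> sqrt 0" by (rule tendsto_real_sqrt)
  then have "(\<lambda>N. \<bar>f N\<bar>) \<longlonglongrightarrow> 0" by simp
  then show ?thesis by (rule tendsto_rabs_zero_cancel)
qed

context gproc
begin

lemma transfer_sqi:
  assumes f: "sqi gauss_measure f"
  shows "sqi M (\<lambda>\<omega>. f (X i \<omega>))"
    and "(\<integral>\<omega>. (f (X i \<omega>))\<^sup>2 \<partial>M) = (\<integral>x. (f x)\<^sup>2 \<partial>gauss_measure)"
proof -
  have fm[measurable]: "f \<in> borel_measurable borel" using f by (simp add: sqi_def)
  show "sqi M (\<lambda>\<omega>. f (X i \<omega>))"
    unfolding sqi_def using std_transfer(1)[OF X_std, of "\<lambda>x. (f x)\<^sup>2"] f by (simp add: sqi_def)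
  show "(\<integral>\<omega>. (f (X i \<omega>))\<^sup>2 \<partial>M) = (\<integral>x. (f x)\<^sup>2 \<partial>gauss_measure)"
    using std_transfer(2)[OF X_std, of "\<lambda>x. (f x)\<^sup>2"] by simp
qed

lemma HN_cross:
  assumes t: "t \<noteq> 0" and rt: "\<bar>r t\<bar> < 1"
  shows "(\<integral>\<omega>. hsum c N (X 0 \<omega>) * hsum c N (X t \<omega>) \<partial>M) = (\<Sum>k\<le>N. (c k)\<^sup>2 * fact k * r t ^ k)"
proof -
  have e: "(\<lambda>\<omega>. hsum c N (X 0 \<omega>) * hsum c N (X t \<omega>)) =
     (\<lambda>\<omega>. \<Sum>j\<le>N. \<Sum>k\<le>N. c j * c k * (hermite j (X 0 \<omega>) * hermite k (X t \<omega>)))"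
    by (simp add: fun_eq_iff hsum_def sum_product mult_ac)
  have "(\<integral>\<omega>. hsum c N (X 0 \<omega>) * hsum c N (X t \<omega>) \<partial>M) =
     (\<Sum>j\<le>N. \<Sum>k\<le>N. c j * c k * (if j = k then fact k * r t ^ k else 0))"
    unfolding e
    apply (subst Bochner_Integration.integral_sum)
     apply (intro Bochner_Integration.integrable_sum Bochner_Integration.integrable_mult_right herm_cross_X(1)[OF t rt])
    apply (intro sum.cong refl)
    apply (subst Bochner_Integration.integral_sum)
     apply (intro Bochner_Integration.integrable_mult_right herm_cross_X(1)[OF t rt])
    apply (intro sum.cong refl)
    apply (simp only: Bochner_Integration.integral_mult_right_zero herm_cross_X(2)[OF t rt])
    done
  also have "\<dots> = (\<Sum>k\<le>N. (c k)\<^sup>2 * fact k * r t ^ k)"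
    by (simp add: if_distrib sum.delta power2_eq_square mult_ac cong: if_cong)
  finally show ?thesis .
qed

lemma claimA:
  assumes F: "sqi gauss_measure F" and t: "t \<noteq> 0" and rt: "\<bar>r t\<bar> < 1"
  shows "(\<lambda>N. \<Sum>k\<le>N. (hermite_coeff F k)\<^sup>2 * fact k * r t ^ k) \<longlonglongrightarrow> (\<integral>\<omega>. F (X 0 \<omega>) * F (X t \<omega>) \<partial>M)"
proof -
  define c where "c = hermite_coeff F"
  define hN where "hN N = hsum c N" for N
  define d where "d N = (\<integral>x. (F x - hN N x)\<^sup>2 \<partial>gauss_measure)" for N
  define Q where "Q = (\<integral>x. (F x)\<^sup>2 \<partial>gauss_measure)"
  have dlim: "d \<longlonglongrightarrow> 0" unfolding d_def hN_def c_def by (rule parseval_ext[OF F])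
  have sqh: "sqi gauss_measure (hN N)" for N unfolding hN_def by (rule sqi_hsum)
  have sqd: "sqi gauss_measure (\<lambda>x. F x - hN N x)" for N by (rule sqi_diff[OF F sqh])
  have hN_le: "(\<integral>x. (hN N x)\<^sup>2 \<partial>gauss_measure) \<le> Q" for N
    unfolding hN_def c_def Q_def hsum_sq by (rule bessel_partial[OF F])
  define a1 where "a1 N = (\<integral>\<omega>. (F (X 0 \<omega>) - hN N (X 0 \<omega>)) * F (X t \<omega>) \<partial>M)" for N
  define a2 where "a2 N = (\<integral>\<omega>. hN N (X 0 \<omega>) * (F (X t \<omega>) - hN N (X t \<omega>)) \<partial>M)" for N
  have a1: "(a1 N)\<^sup>2 \<le> Q * d N" for N
  proof -
    have "(a1 N)\<^sup>2 \<le> (\<integral>\<omega>. (F (X 0 \<omega>) - hN N (X 0 \<omega>))\<^sup>2 \<partial>M) * (\<integral>\<omega>. (F (X t \<omega>))\<^sup>2 \<partial>M)"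
      unfolding a1_def by (rule cauchy_schwarz_sqi[OF transfer_sqi(1)[OF sqd] transfer_sqi(1)[OF F]])
    also have "\<dots> = d N * Q"
      using transfer_sqi(2)[OF sqd[of N], of 0] transfer_sqi(2)[OF F, of t] by (simp add: d_def Q_def)
    finally show ?thesis by (simp add: mult.commute)
  qed
  have a2: "(a2 N)\<^sup>2 \<le> Q * d N" for N
  proof -
    have "(a2 N)\<^sup>2 \<le> (\<integral>\<omega>. (hN N (X 0 \<omega>))\<^sup>2 \<partial>M) * (\<integral>\<omega>. (F (X t \<omega>) - hN N (X t \<omega>))\<^sup>2 \<partial>M)"
      unfolding a2_def by (rule cauchy_schwarz_sqi[OF transfer_sqi(1)[OF sqh] transfer_sqi(1)[OF sqd]])
    also have "\<dots> = (\<integral>x. (hN N x)\<^sup>2 \<partial>gauss_measure) * d N"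
      using transfer_sqi(2)[OF sqh[of N], of 0] transfer_sqi(2)[OF sqd[of N], of t] by (simp add: d_def)
    also have "\<dots> \<le> Q * d N"
      by (intro mult_right_mono hN_le) (simp add: d_def sqi_nonneg)
    finally show ?thesis .
  qed
  have Qd: "(\<lambda>N. Q * d N) \<longlonglongrightarrow> 0" using tendsto_mult[OF tendsto_const dlim, of Q] by simp
  have a1l: "a1 \<longlonglongrightarrow> 0" by (rule sq_bound_to_zero[OF a1 Qd])
  have a2l: "a2 \<longlonglongrightarrow> 0" by (rule sq_bound_to_zero[OF a2 Qd])
  have split: "(\<integral>\<omega>. F (X 0 \<omega>) * F (X t \<omega>) \<partial>M) =
      (\<integral>\<omega>. hN N (X 0 \<omega>) * hN N (X t \<omega>) \<partial>M) + a1 N + a2 N" for N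
  proof -
    have i1: "integrable M (\<lambda>\<omega>. (F (X 0 \<omega>) - hN N (X 0 \<omega>)) * F (X t \<omega>))"
      by (rule sqi_prod[OF transfer_sqi(1)[OF sqd] transfer_sqi(1)[OF F]])
    have i2: "integrable M (\<lambda>\<omega>. hN N (X 0 \<omega>) * (F (X t \<omega>) - hN N (X t \<omega>)))"
      by (rule sqi_prod[OF transfer_sqi(1)[OF sqh] transfer_sqi(1)[OF sqd]])
    have i3: "integrable M (\<lambda>\<omega>. hN N (X 0 \<omega>) * hN N (X t \<omega>))"
      by (rule sqi_prod[OF transfer_sqi(1)[OF sqh] transfer_sqi(1)[OF sqh]])
    have "(\<integral>\<omega>. F (X 0 \<omega>) * F (X t \<omega>) \<partial>M) =
       (\<integral>\<omega>. hN N (X 0 \<omega>) * hN N (X t \<omega>) + ((F (X 0 \<omega>) - hN N (X 0 \<omega>)) * F (X t \<omega>) +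
          hN N (X 0 \<omega>) * (F (X t \<omega>) - hN N (X t \<omega>))) \<partial>M)"
      by (rule Bochner_Integration.integral_cong) (simp_all add: algebra_simps)
    also have "\<dots> = (\<integral>\<omega>. hN N (X 0 \<omega>) * hN N (X t \<omega>) \<partial>M) + a1 N + a2 N"
      unfolding a1_def a2_def using i1 i2 i3
      by (simp add: Bochner_Integration.integral_add Bochner_Integration.integrable_add)
    finally show ?thesis .
  qed
  have "(\<lambda>N. (\<integral>\<omega>. F (X 0 \<omega>) * F (X t \<omega>) \<partial>M) - a1 N - a2 N) \<longlonglongrightarrow>
      (\<integral>\<omega>. F (X 0 \<omega>) * F (X t \<omega>) \<partial>M) - 0 - 0"
    by (intro tendsto_diff tendsto_const a1l a2l)
  moreover have "(\<integral>\<omega>. F (X 0 \<omega>) * F (X t \<omega>) \<partial>M) - a1 N - a2 N = (\<Sum>k\<le>N. (hermite_coeff F k)\<^sup>2 * fact k * r t ^ k)" for N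
    using split[of N] HN_cross[OF t rt, of c N] by (simp add: hN_def c_def)
  ultimately show ?thesis by simp
qed

end


lemma summable_on_cofinite_compare:
  fixes f g :: "int \<Rightarrow> real"
  assumes E: "finite E" and b: "\<And>t. t \<notin> E \<Longrightarrow> 0 \<le> f t \<and> f t \<le> C * g t"
    and g: "g summable_on UNIV"
  shows "f summable_on UNIV"
proof -
  have "g summable_on (UNIV - E)" by (rule summable_on_cofin_subset[OF g E])
  then have "(\<lambda>t. C * g t) summable_on (UNIV - E)" by (rule summable_on_cmult_right)
  then have "f summable_on (UNIV - E)"
    by (rule summable_on_comparison_test) (use b in auto)
  moreover have "f summable_on E" using E by (rule summable_on_finite)
  ultimately have "f summable_on ((UNIV - E) \<union> E)" by (rule summable_on_union)
  then show ?thesis by simp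
qed

context gproc
begin

lemma main_equiv:
  assumes H: "sqi gauss_measure H" and c0: "hermite_coeff H 0 = 0"
    and Hnz: "\<not> (AE x in gauss_measure. H x = 0)"
    and lt: "(r \<longlongrightarrow> 0) at_top" and lb: "(r \<longlongrightarrow> 0) at_bot"
  shows "((\<lambda>t. \<bar>\<integral>\<omega>. H (X 0 \<omega>) * H (X t \<omega>) \<partial>M\<bar>) summable_on (UNIV :: int set))
     \<longleftrightarrow> ((\<lambda>t. \<bar>r t\<bar> ^ hermite_rank H) summable_on (UNIV :: int set))"
proof -
  define c where "c = hermite_coeff H"
  define rH where "rH t = (\<integral>\<omega>. H (X 0 \<omega>) * H (X t \<omega>) \<partial>M)" for t
  have exK: "\<exists>k. c k \<noteq> 0"
  proof (rule ccontr)
    assume "\<not> ?thesis"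
    then have "\<And>k. (\<integral>x. H x * hermite k x \<partial>gauss_measure) = 0"
      using F_He[OF H] by (simp add: c_def)
    then have "AE x in gauss_measure. H x = 0" by (rule hermite_complete[OF H])
    then show False using Hnz by simp
  qed
  define ks where "ks = hermite_rank H"
  have cks: "c ks \<noteq> 0" unfolding ks_def hermite_rank_def c_def using LeastI_ex[OF exK[unfolded c_def]] .
  have below: "c k = 0" if "k < ks" for k
    using not_less_Least[OF that[unfolded ks_def hermite_rank_def]] by (simp add: c_def)
  define A where "A = (c ks)\<^sup>2 * fact ks"
  have Apos: "A > 0" using cks unfolding A_def by simp
  define T where "T = (\<Sum>k. (c k)\<^sup>2 * fact k)"
  have summ: "summable (\<lambda>k. (c k)\<^sup>2 * fact k)" unfolding c_def by (rule bessel_summable[OF H])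
  have PT: "(\<Sum>k\<in>I. (c k)\<^sup>2 * fact k) \<le> T" if "finite I" for I
    unfolding T_def by (rule sum_le_suminf[OF summ that]) simp
  have T0: "T \<ge> 0" using PT[of "{}"] by simp
  define \<delta> where "\<delta> = min (1/2) (A / (2 * (T + 1)))"
  have dpos: "\<delta> > 0" using Apos T0 unfolding \<delta>_def by simp
  have dT: "\<delta> * T \<le> A / 2"
  proof -
    have "\<delta> * T \<le> A / (2 * (T + 1)) * T" using T0 unfolding \<delta>_def by (intro mult_right_mono) auto
    also have "\<dots> \<le> A / 2" using Apos T0 by (simp add: field_simps)
    finally show ?thesis .
  qed
  have bounds: "A / 2 * \<bar>r t\<bar> ^ ks \<le> \<bar>rH t\<bar> \<and> \<bar>rH t\<bar> \<le> (A + T) * \<bar>r t\<bar> ^ ks"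
    if t: "t \<noteq> 0" and rt: "\<bar>r t\<bar> \<le> \<delta>" for t
  proof -
    define \<rho> where "\<rho> = r t"
    have r1: "\<bar>\<rho>\<bar> \<le> 1/2" using rt unfolding \<rho>_def \<delta>_def by simp
    have lim: "(\<lambda>N. \<Sum>k\<le>N. (c k)\<^sup>2 * fact k * \<rho> ^ k) \<longlonglongrightarrow> rH t"
      using claimA[OF H t] r1 unfolding c_def rH_def \<rho>_def by simp
    have partial: "\<bar>(\<Sum>k\<le>N. (c k)\<^sup>2 * fact k * \<rho> ^ k) - A * \<rho> ^ ks\<bar> \<le> \<bar>\<rho>\<bar> ^ Suc ks * T"
      if N: "ks \<le> N" for N
    proof -
      have "(\<Sum>k\<le>N. (c k)\<^sup>2 * fact k * \<rho> ^ k) = (c ks)\<^sup>2 * fact ks * \<rho> ^ ks +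
          (\<Sum>k\<in>{..N} - {ks}. (c k)\<^sup>2 * fact k * \<rho> ^ k)"
        using N by (subst sum.remove[of _ ks]) auto
      then have "\<bar>(\<Sum>k\<le>N. (c k)\<^sup>2 * fact k * \<rho> ^ k) - A * \<rho> ^ ks\<bar> =
          \<bar>\<Sum>k\<in>{..N} - {ks}. (c k)\<^sup>2 * fact k * \<rho> ^ k\<bar>" by (simp add: A_def)
      also have "\<dots> \<le> (\<Sum>k\<in>{..N} - {ks}. \<bar>(c k)\<^sup>2 * fact k * \<rho> ^ k\<bar>)" by (rule sum_abs)
      also have "\<dots> \<le> (\<Sum>k\<in>{..N} - {ks}. (c k)\<^sup>2 * fact k * \<bar>\<rho>\<bar> ^ Suc ks)"
      proof (rule sum_mono)
        fix k assume k: "k \<in> {..N} - {ks}"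
        show "\<bar>(c k)\<^sup>2 * fact k * \<rho> ^ k\<bar> \<le> (c k)\<^sup>2 * fact k * \<bar>\<rho>\<bar> ^ Suc ks"
        proof (cases "k < ks")
          case True then show ?thesis using below by simp
        next
          case False
          then have "Suc ks \<le> k" using k by auto
          then have "\<bar>\<rho>\<bar> ^ k \<le> \<bar>\<rho>\<bar> ^ Suc ks" using r1 by (intro power_decreasing) auto
          then show ?thesis by (simp add: abs_mult power_abs mult_left_mono)
        qed
      qed
      also have "\<dots> = (\<Sum>k\<in>{..N} - {ks}. (c k)\<^sup>2 * fact k) * \<bar>\<rho>\<bar> ^ Suc ks"
        by (simp add: sum_distrib_right)
      also have "\<dots> \<le> T * \<bar>\<rho>\<bar> ^ Suc ks"
        by (intro mult_right_mono PT) auto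
      finally show ?thesis by (simp add: mult.commute)
    qed
    have "(\<lambda>N. \<bar>(\<Sum>k\<le>N. (c k)\<^sup>2 * fact k * \<rho> ^ k) - A * \<rho> ^ ks\<bar>) \<longlonglongrightarrow> \<bar>rH t - A * \<rho> ^ ks\<bar>"
      by (intro tendsto_rabs tendsto_diff lim tendsto_const)
    then have main: "\<bar>rH t - A * \<rho> ^ ks\<bar> \<le> \<bar>\<rho>\<bar> ^ Suc ks * T"
      by (rule LIMSEQ_le_const2) (use partial in \<open>auto intro: exI[of _ ks]\<close>)
    have e1: "\<bar>\<rho>\<bar> ^ Suc ks * T \<le> \<delta> * T * \<bar>\<rho>\<bar> ^ ks"
    proof -
      have "\<bar>\<rho>\<bar> * \<bar>\<rho>\<bar> ^ ks \<le> \<delta> * \<bar>\<rho>\<bar> ^ ks" using rt by (intro mult_right_mono) (simp_all add: \<rho>_def)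
      then have "T * (\<bar>\<rho>\<bar> * \<bar>\<rho>\<bar> ^ ks) \<le> T * (\<delta> * \<bar>\<rho>\<bar> ^ ks)" using T0 by (rule mult_left_mono)
      then show ?thesis by (simp add: mult_ac)
    qed
    have e2: "\<bar>\<rho>\<bar> ^ Suc ks * T \<le> T * \<bar>\<rho>\<bar> ^ ks"
    proof -
      have "\<bar>\<rho>\<bar> * \<bar>\<rho>\<bar> ^ ks \<le> 1 * \<bar>\<rho>\<bar> ^ ks" using r1 by (intro mult_right_mono) simp_all
      then have "T * (\<bar>\<rho>\<bar> * \<bar>\<rho>\<bar> ^ ks) \<le> T * (1 * \<bar>\<rho>\<bar> ^ ks)" using T0 by (rule mult_left_mono)
      then show ?thesis by (simp add: mult_ac)
    qed
    have aa: "\<bar>A * \<rho> ^ ks\<bar> = A * \<bar>\<rho>\<bar> ^ ks" using Apos by (simp add: abs_mult power_abs)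
    have pp: "0 \<le> \<bar>\<rho>\<bar> ^ ks" by simp
    have "A / 2 * \<bar>\<rho>\<bar> ^ ks \<le> \<bar>rH t\<bar>"
    proof -
      have "\<delta> * T * \<bar>\<rho>\<bar> ^ ks \<le> A / 2 * \<bar>\<rho>\<bar> ^ ks" by (intro mult_right_mono dT pp)
      then show ?thesis using main e1 aa by linarith
    qed
    moreover have "\<bar>rH t\<bar> \<le> (A + T) * \<bar>\<rho>\<bar> ^ ks"
      using main e2 aa by (simp add: distrib_right) linarith
    ultimately show ?thesis unfolding \<rho>_def by simp
  qed
  obtain T1 where T1: "\<And>t. t \<ge> T1 \<Longrightarrow> \<bar>r t\<bar> \<le> \<delta>"
  proof -
    have "eventually (\<lambda>t. dist (r t) 0 < \<delta>) at_top" using lt dpos by (rule tendstoD)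
    then obtain N where N: "\<And>n. n \<ge> N \<Longrightarrow> \<bar>r n\<bar> < \<delta>" unfolding eventually_at_top_linorder by auto
    then show ?thesis by (intro that[of N]) (simp add: less_imp_le)
  qed
  obtain T2 where T2: "\<And>t. t \<le> T2 \<Longrightarrow> \<bar>r t\<bar> \<le> \<delta>"
  proof -
    have "eventually (\<lambda>t. dist (r t) 0 < \<delta>) at_bot" using lb dpos by (rule tendstoD)
    then obtain N where N: "\<And>n. n \<le> N \<Longrightarrow> \<bar>r n\<bar> < \<delta>" unfolding eventually_at_bot_linorder by auto
    then show ?thesis by (intro that[of N]) (simp add: less_imp_le)
  qed
  define E where "E = {t. \<not> (t \<noteq> 0 \<and> \<bar>r t\<bar> \<le> \<delta>)}"
  have Efin: "finite E"
  proof (rule finite_subset[of _ "{min T2 0..max T1 0}"])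
    show "E \<subseteq> {min T2 0..max T1 0}"
    proof
      fix x assume "x \<in> E"
      then have "x = 0 \<or> \<delta> < \<bar>r x\<bar>" unfolding E_def by auto
      then show "x \<in> {min T2 0..max T1 0}"
      proof
        assume "\<delta> < \<bar>r x\<bar>"
        then have "\<not> T1 \<le> x" "\<not> x \<le> T2" using T1[of x] T2[of x] by auto
        then show ?thesis by auto
      qed simp
    qed
  qed simp
  have bE: "A / 2 * \<bar>r t\<bar> ^ ks \<le> \<bar>rH t\<bar> \<and> \<bar>rH t\<bar> \<le> (A + T) * \<bar>r t\<bar> ^ ks" if "t \<notin> E" for t
    using bounds that unfolding E_def by auto
  show ?thesis unfolding rH_def[symmetric] ks_def[symmetric]
  proof
    assume "(\<lambda>t. \<bar>rH t\<bar>) summable_on UNIV"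
    then show "(\<lambda>t. \<bar>r t\<bar> ^ ks) summable_on UNIV"
    proof (rule summable_on_cofinite_compare[OF Efin, rotated])
      fix t assume "t \<notin> E"
      from bE[OF this] Apos show "0 \<le> \<bar>r t\<bar> ^ ks \<and> \<bar>r t\<bar> ^ ks \<le> 2 / A * \<bar>rH t\<bar>"
        by (simp add: field_simps)
    qed
  next
    assume "(\<lambda>t. \<bar>r t\<bar> ^ ks) summable_on UNIV"
    then show "(\<lambda>t. \<bar>rH t\<bar>) summable_on UNIV"
    proof (rule summable_on_cofinite_compare[OF Efin, rotated])
      fix t assume "t \<notin> E"
      from bE[OF this] show "0 \<le> \<bar>rH t\<bar> \<and> \<bar>rH t\<bar> \<le> (A + T) * \<bar>r t\<bar> ^ ks" by simp
    qed
  qed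
qed

end

theorem mainTheorem5:
  fixes M :: "'a measure" and X :: "int \<Rightarrow> 'a \<Rightarrow> real" and r :: "int \<Rightarrow> real"
    and H :: "real \<Rightarrow> real"
  assumes "prob_space M"
    and "centered_gaussian_process M X"
    and "\<And>i t. (\<integral>\<omega>. X i \<omega> * X (i + t) \<omega> \<partial>M) = r t"
    and "r 0 = 1"
    and "(r \<longlongrightarrow> 0) at_top" and "(r \<longlongrightarrow> 0) at_bot"
    and "H \<in> borel_measurable borel"
    and "integrable gauss_measure (\<lambda>x. (H x)\<^sup>2)"
    and "hermite_coeff H 0 = 0"
    and "\<not> (AE x in gauss_measure. H x = 0)"
  shows "((\<lambda>t. \<bar>\<integral>\<omega>. H (X 0 \<omega>) * H (X t \<omega>) \<partial>M\<bar>) summable_on (UNIV :: int set))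
     \<longleftrightarrow> ((\<lambda>t. \<bar>r t\<bar> ^ hermite_rank H) summable_on (UNIV :: int set))"
proof -
  have "gproc M X r"
    unfolding gproc_def gproc_axioms_def using assms(1-4) by blast
  then interpret g: gproc M X r .
  have H: "sqi gauss_measure H" using assms(7,8) by (simp add: sqi_def)
  show ?thesis by (rule g.main_equiv[OF H assms(9,10,5,6)])
qed

end
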